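(* (Mellin reproducing kernel formula.) Let $c\in\mathbb{R}$, $\sigma>0$ and $f\in\widetilde{B}^2_{c,\pi\sigma}$. Then for every $x\in\mathbb{R}^+$ $$f(x)=\sigma\int_0^\infty f(y)\,\mathrm{lin}_{c/\sigma}\Big(\big(\tfrac{x}{y}\big)^\sigma\Big)\frac{dy}{y},$$ the integral being absolutely convergent.
   Context: $\mathbb{R}^+=(0,\infty)$, $\Omega=\mathbb{C}\setminus[0,\infty)$. For $a\in\mathbb{R}$, $\mathrm{lin}_a:\mathbb{R}^+\to\mathbb{R}$ is $\mathrm{lin}_a(x)=\frac{x^{-a}}{2\pi i}\frac{x^{\pi i}-x^{-\pi i}}{\log x}=\frac{x^{-a}}{2\pi}\int_{-\pi}^{\pi}x^{-it}\,dt$ for $x\neq1$, and $\mathrm{lin}_a(1)=1$. For $c\in\mathbb{R}$, $X^2_c$ is the space of measurable $f:\mathbb{R}^+\to\mathbb{C}$ with $f(x)x^{c-1/2}\in L^2(\mathbb{R}^+)$. For $T>0$, the Mellin–Bernstein space $\widetilde{B}^2_{c,T}$ consists of all $f\in X^2_c$ such that $g(x):=x^cf(x)$ has an analytic extension to the Riemann surface of the logarithm, given by analytic branches $g_k:\Omega\to\mathbb{C}$, $k\in\mathbb{Z}$, with: (i) for every $x>0$ the limits $g_k^+(x)=\lim_{\varepsilon\to0^+}g_k(x+i\varepsilon)$ and $g_k^-(x)=\lim_{\varepsilon\to0^+}g_k(x-i\varepsilon)$ exist, $g_k^-(x)=g_{k+1}^+(x)$, and $g_0^+(x)=g(x)$;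 (ii) for every $x>0$ and every open disk $U_x$ in the right half-plane centered at $x$, the function $\psi_k:U_x\to\mathbb{C}$ equal to $g_k(z)$ for $\Im z<0$, to $g_k^-(z)$ for $z\in U_x\cap\mathbb{R}$, and to $g_{k+1}(z)$ for $\Im z>0$, is analytic; (iii) there is $C>0$ such that $|g_k(re^{i\theta})|\le Ce^{T|2\pi k+\theta|}$ for all $k\in\mathbb{Z}$, $\theta\in[0,2\pi]$, $r>0$; (iv) for each $k$, $\lim_{r\to0}g_k(re^{i\theta})=\lim_{r\to\infty}g_k(re^{i\theta})=0$ uniformly in $\theta\in[0,2\pi]$. In (iii) and (iv), $g_k(re^{i0})$ means $g_k^+(r)$ and $g_k(re^{2\pi i})$ means $g_k^-(r)$. *)

theory Defs
  imports "HOL-Analysis.Analysis"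
begin

text \<open>The function lin_a. For x \<noteq> 1 the paper's formula
  x^{-a}/(2 pi i) * (x^{pi i} - x^{-pi i}) / log x equals x^{-a} sin(pi log x)/(pi log x).\<close>
definition lin :: "real \<Rightarrow> real \<Rightarrow> real" where
  "lin a x = (if x = 1 then 1 else x powr (-a) * sin (pi * ln x) / (pi * ln x))"

text \<open>The space X^2_c (functions on (0,oo), values at x \<le> 0 irrelevant).\<close>
definition X2 :: "real \<Rightarrow> (real \<Rightarrow> complex) \<Rightarrow> bool" where
  "X2 c f \<longleftrightarrow> set_borel_measurable lebesgue {0<..} f \<and>
     set_integrable lebesgue {0<..} (\<lambda>x. (cmod (f x * of_real (x powr (c - 1/2))))\<^sup>2)"

definition slit :: "complex set" where
  "slit = UNIV - complex_of_real ` {0..}"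

text \<open>Values of the branch k on the ray of angle theta in [0, 2 pi], using the
  boundary limits gp (theta = 0) and gm (theta = 2 pi).\<close>
definition branch_val ::
  "(int \<Rightarrow> complex \<Rightarrow> complex) \<Rightarrow> (int \<Rightarrow> real \<Rightarrow> complex) \<Rightarrow> (int \<Rightarrow> real \<Rightarrow> complex)
    \<Rightarrow> int \<Rightarrow> real \<Rightarrow> real \<Rightarrow> complex" where
  "branch_val g gp gm k r \<theta> =
     (if \<theta> = 0 then gp k r else if \<theta> = 2 * pi then gm k r else g k (of_real r * cis \<theta>))"

definition mellin_bernstein :: "real \<Rightarrow> real \<Rightarrow> (real \<Rightarrow> complex) \<Rightarrow> bool" where
  "mellin_bernstein c T f \<longleftrightarrow> X2 c f \<and>
    (\<exists>(g :: int \<Rightarrow> complex \<Rightarrow> complex) (gp :: int \<Rightarrow> real \<Rightarrow> complex) (gm :: int \<Rightarrow> real \<Rightarrow> complex).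
       (\<forall>k. g k holomorphic_on slit) \<and>
       \<comment> \<open>(i)\<close>
       (\<forall>k. \<forall>x>0. ((\<lambda>\<epsilon>. g k (of_real x + \<i> * of_real \<epsilon>)) \<longlongrightarrow> gp k x) (at_right 0)) \<and>
       (\<forall>k. \<forall>x>0. ((\<lambda>\<epsilon>. g k (of_real x - \<i> * of_real \<epsilon>)) \<longlongrightarrow> gm k x) (at_right 0)) \<and>
       (\<forall>k. \<forall>x>0. gm k x = gp (k + 1) x) \<and>
       (\<forall>x>0. gp 0 x = of_real (x powr c) * f x) \<and>
       \<comment> \<open>(ii)\<close>
       (\<forall>k. \<forall>x>0. \<forall>r. 0 < r \<and> r \<le> x \<longrightarrow>
          (\<lambda>z. if Im z < 0 then g k z else if Im z = 0 then gm k (Re z) else g (k + 1) z)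
            analytic_on ball (of_real x) r) \<and>
       \<comment> \<open>(iii)\<close>
       (\<exists>C>0. \<forall>k. \<forall>\<theta>\<in>{0..2*pi}. \<forall>r>0.
          cmod (branch_val g gp gm k r \<theta>) \<le> C * exp (T * \<bar>2 * pi * of_int k + \<theta>\<bar>)) \<and>
       \<comment> \<open>(iv)\<close>
       (\<forall>k. \<forall>e>0. \<exists>d>0. \<forall>r. \<forall>\<theta>\<in>{0..2*pi}. 0 < r \<and> r < d \<longrightarrow>
          cmod (branch_val g gp gm k r \<theta>) < e) \<and>
       (\<forall>k. \<forall>e>0. \<exists>R. \<forall>r. \<forall>\<theta>\<in>{0..2*pi}. r > R \<longrightarrow>
          cmod (branch_val g gp gm k r \<theta>) < e))"

end

theory Submission
  imports Defs "HOL-Complex_Analysis.Complex_Analysis" "HOL-Real_Asymp.Real_Asymp"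
begin


lemma inv_sq_integrable: "(\<lambda>x::real. 1 / (1 + (x - t)\<^sup>2)) integrable_on UNIV"
proof -
  have "set_integrable lborel (einterval (-\<infinity>) \<infinity>) (\<lambda>x::real. 1 / (1 + (x - t)\<^sup>2))"
  proof (rule interval_integral_FTC_nonneg(1)[where F = "\<lambda>x. arctan (x - t)" and A = "-(pi/2)" and B = "pi/2"])
    have *: "((\<lambda>x. arctan (x - t)) \<longlongrightarrow> - (pi / 2)) at_bot"
      by (rule filterlim_compose[OF tendsto_arctan_at_bot]) real_asymp
    show "(((\<lambda>x. arctan (x - t)) \<circ> real_of_ereal) \<longlongrightarrow> - (pi / 2)) (at_right (- \<infinity>))"
      using * by (simp add: ereal_tendsto_simps)
    have *: "((\<lambda>x. arctan (x - t)) \<longlongrightarrow> (pi / 2)) at_top"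
      by (rule filterlim_compose[OF tendsto_arctan_at_top]) real_asymp
    show "(((\<lambda>x. arctan (x - t)) \<circ> real_of_ereal) \<longlongrightarrow> pi / 2) (at_left \<infinity>)"
      using * by (simp add: ereal_tendsto_simps)
  qed (auto intro!: derivative_eq_intros simp: power2_eq_square add_nonneg_eq_0_iff inverse_eq_divide)
  then have "set_integrable lborel UNIV (\<lambda>x::real. 1 / (1 + (x - t)\<^sup>2))"
    by simp
  then show ?thesis using set_borel_integral_eq_integral(1) by blast
qed

lemma lim_int_sym:
  fixes h :: "real \<Rightarrow> complex"
  assumes h: "h absolutely_integrable_on UNIV"
  shows "(\<lambda>n. integral {-real n..real n} h) \<longlonglongrightarrow> integral UNIV h"
proof -
  define f where "f n x = (if x \<in> {-real n..real n} then h x else 0)" for n x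
  have hi: "h integrable_on UNIV" and nhi: "(\<lambda>x. norm (h x)) integrable_on UNIV"
    using h absolutely_integrable_on_def by blast+
  have fi: "f n integrable_on UNIV" for n
  proof -
    have "h absolutely_integrable_on {-real n..real n}"
      using h by (rule set_integrable_subset) auto
    then have "h integrable_on {-real n..real n}"
      using absolutely_integrable_on_def by blast
    then show ?thesis unfolding f_def by (rule iffD2[OF integrable_restrict_UNIV])
  qed
  have "(\<lambda>n. integral UNIV (f n)) \<longlonglongrightarrow> integral UNIV h"
  proof (rule dominated_convergence(2)[OF fi nhi])
    show "norm (f n x) \<le> norm (h x)" for n x by (simp add: f_def)
    show "(\<lambda>n. f n x) \<longlonglongrightarrow> h x" for x
    proof (rule tendsto_eventually)
      obtain N :: nat where "\<bar>x\<bar> \<le> real N" using real_arch_simple by blast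
      then show "\<forall>\<^sub>F n in sequentially. f n x = h x"
        unfolding eventually_sequentially f_def by (intro exI[of _ N]) auto
    qed
  qed
  moreover have "integral UNIV (f n) = integral {-real n..real n} h" for n
    unfolding f_def by (rule integral_restrict_UNIV)
  ultimately show ?thesis by simp
qed

lemma abs_int_decay:
  fixes h :: "real \<Rightarrow> complex"
  assumes cont: "continuous_on UNIV h"
    and B: "\<And>u. \<bar>u - t\<bar> \<ge> 1 \<Longrightarrow> norm (h u) \<le> B / (1 + (u - t)\<^sup>2)"
  shows "h absolutely_integrable_on UNIV"
proof -
  have "compact (h ` {t-1..t+1})"
    by (rule compact_continuous_image) (auto intro: continuous_on_subset[OF cont])
  then obtain M where M: "\<And>u. u \<in> {t-1..t+1} \<Longrightarrow> norm (h u) \<le> M"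
    using compact_imp_bounded bounded_iff by (metis image_eqI)
  define K where "K = 2 * max M 0 + max B 0"
  have bnd: "norm (h u) \<le> K * (1 / (1 + (u - t)\<^sup>2))" for u
  proof (cases "\<bar>u - t\<bar> \<ge> 1")
    case True
    have "norm (h u) \<le> B / (1 + (u - t)\<^sup>2)" using B True by blast
    also have "\<dots> \<le> max B 0 / (1 + (u - t)\<^sup>2)"
      by (intro divide_right_mono) (auto simp: add_pos_nonneg)
    also have "\<dots> \<le> K * (1 / (1 + (u - t)\<^sup>2))"
      using add_pos_nonneg[of 1 "(u-t)^2"] by (simp add: K_def field_simps)
    finally show ?thesis .
  next
    case False
    then have u: "u \<in> {t-1..t+1}" by auto
    have sq: "(u - t)\<^sup>2 \<le> 1" using False abs_square_le_1[of "u-t"] by simp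
    have "norm (h u) \<le> max M 0" using M[OF u] by simp
    also have "\<dots> \<le> 2 * max M 0 / (1 + (u - t)\<^sup>2)"
    proof -
      have D: "0 < 1 + (u-t)^2" "1 + (u-t)^2 \<le> 2" using sq by (auto simp: add_pos_nonneg)
      have "max M 0 * (1 + (u-t)^2) \<le> max M 0 * 2" by (rule mult_left_mono) (use D in auto)
      then show ?thesis using D by (simp add: le_divide_eq mult.commute)
    qed
    also have "\<dots> \<le> K * (1 / (1 + (u - t)\<^sup>2))"
      using add_pos_nonneg[of 1 "(u-t)^2"] by (simp add: K_def field_simps)
    finally show ?thesis .
  qed
  show ?thesis
  proof (rule measurable_bounded_by_integrable_imp_absolutely_integrable)
    show "h \<in> borel_measurable (lebesgue_on UNIV)"
      using cont by (rule continuous_imp_measurable_on_sets_lebesgue) auto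
    show "(\<lambda>u. K * (1 / (1 + (u - t)\<^sup>2))) integrable_on UNIV"
      by (intro integrable_on_mult_right inv_sq_integrable)
  qed (use bnd in auto)
qed

lemma hline_contour:
  fixes F :: "complex \<Rightarrow> complex"
  assumes "a < b"
  shows "(F has_contour_integral I) (linepath (Complex a y) (Complex b y)) \<longleftrightarrow>
         ((\<lambda>u. F (Complex u y)) has_integral I) {a..b}"
proof -
  have eq: "linepath (Complex a y) (Complex b y) x = linepath (of_real a) (of_real b) x + \<i> * of_real y" for x
    by (simp add: linepath_def complex_eq_iff algebra_simps)
  have "(F has_contour_integral I) (linepath (Complex a y) (Complex b y)) \<longleftrightarrow>
        ((\<lambda>z. F (z + \<i> * of_real y)) has_contour_integral I) (linepath (of_real a) (of_real b))"
  proof -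
    have d: "Complex b y - Complex a y = of_real b - of_real a" by (simp add: complex_eq_iff)
    show ?thesis unfolding has_contour_integral_linepath eq d by simp
  qed
  also have "\<dots> \<longleftrightarrow> ((\<lambda>u. F (of_real u + \<i> * of_real y)) has_integral I) {a..b}"
    using assms by (subst has_contour_integral_linepath_Reals_iff) auto
  also have "(\<lambda>u. F (of_real u + \<i> * of_real y)) = (\<lambda>u. F (Complex u y))"
    by (simp add: Complex_eq fun_eq_iff)
  finally show ?thesis .
qed


lemma hline_integral:
  fixes F :: "complex \<Rightarrow> complex"
  assumes "a < b" and cont: "continuous_on (closed_segment (Complex a y) (Complex b y)) F"
  shows "contour_integral (linepath (Complex a y) (Complex b y)) F = integral {a..b} (\<lambda>u. F (Complex u y))"
proof -
  have "continuous_on {a..b} (\<lambda>u. F (Complex u y))"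
  proof (rule continuous_on_compose2[OF cont])
    show "continuous_on {a..b} (\<lambda>u. Complex u y)"
      by (simp add: Complex_eq continuous_intros)
    show "(\<lambda>u. Complex u y) ` {a..b} \<subseteq> closed_segment (Complex a y) (Complex b y)"
      using assms(1) by (auto simp: closed_segment_same_Im closed_segment_eq_real_ivl)
  qed
  then have "((\<lambda>u. F (Complex u y)) has_integral integral {a..b} (\<lambda>u. F (Complex u y))) {a..b}"
    using integrable_continuous_real by blast
  then have "(F has_contour_integral integral {a..b} (\<lambda>u. F (Complex u y))) (linepath (Complex a y) (Complex b y))"
    using hline_contour[OF assms(1)] by blast
  then show ?thesis by (rule contour_integral_unique)
qed

lemma rect_sum:
  fixes F :: "complex \<Rightarrow> complex"
  assumes "a < b" "y0 < y1" and cont: "continuous_on (path_image (rectpath (Complex a y0) (Complex b y1))) F"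
  shows "contour_integral (rectpath (Complex a y0) (Complex b y1)) F =
           integral {a..b} (\<lambda>u. F (Complex u y0)) - integral {a..b} (\<lambda>u. F (Complex u y1))
         + contour_integral (linepath (Complex b y0) (Complex b y1)) F
         + contour_integral (linepath (Complex a y1) (Complex a y0)) F"
proof -
  let ?P = "path_image (rectpath (Complex a y0) (Complex b y1))"
  have P: "?P = closed_segment (Complex a y0) (Complex b y0) \<union> closed_segment (Complex b y0) (Complex b y1)
     \<union> closed_segment (Complex b y1) (Complex a y1) \<union> closed_segment (Complex a y1) (Complex a y0)"
    by (simp add: rectpath_def Let_def path_image_join Un_assoc)
  have cs1: "continuous_on (closed_segment (Complex a y0) (Complex b y0)) F"
    by (rule continuous_on_subset[OF cont]) (unfold P, blast)
  have cs2: "continuous_on (closed_segment (Complex b y0) (Complex b y1)) F"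
    by (rule continuous_on_subset[OF cont]) (unfold P, blast)
  have cs3: "continuous_on (closed_segment (Complex b y1) (Complex a y1)) F"
    by (rule continuous_on_subset[OF cont]) (unfold P, blast)
  have cs3': "continuous_on (closed_segment (Complex a y1) (Complex b y1)) F"
    using cs3 by (simp add: closed_segment_commute)
  have cs4: "continuous_on (closed_segment (Complex a y1) (Complex a y0)) F"
    by (rule continuous_on_subset[OF cont]) (unfold P, blast)
  have "contour_integral (rectpath (Complex a y0) (Complex b y1)) F =
        contour_integral (linepath (Complex a y0) (Complex b y0)) F
      + contour_integral (linepath (Complex b y0) (Complex b y1)) F
      + contour_integral (linepath (Complex b y1) (Complex a y1)) F
      + contour_integral (linepath (Complex a y1) (Complex a y0)) F"
    unfolding rectpath_def Let_def
    using contour_integrable_continuous_linepath[OF cs1] contour_integrable_continuous_linepath[OF cs2]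
      contour_integrable_continuous_linepath[OF cs3] contour_integrable_continuous_linepath[OF cs4]
    by (simp add: valid_path_join)
  also have "contour_integral (linepath (Complex a y0) (Complex b y0)) F = integral {a..b} (\<lambda>u. F (Complex u y0))"
    by (rule hline_integral[OF assms(1) cs1])
  also have "contour_integral (linepath (Complex b y1) (Complex a y1)) F = - integral {a..b} (\<lambda>u. F (Complex u y1))"
    using contour_integral_reverse_linepath[OF cs3'] hline_integral[OF assms(1) cs3']
    by simp
  finally show ?thesis by simp
qed


lemma vseg_bound:
  fixes F :: "complex \<Rightarrow> complex"
  assumes "F contour_integrable_on linepath p q" "Re p = Re q" "0 \<le> B"
    and "\<And>z. Re z = Re p \<Longrightarrow> Im z \<in> closed_segment (Im p) (Im q) \<Longrightarrow> norm (F z) \<le> B"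
  shows "norm (contour_integral (linepath p q) F) \<le> B * \<bar>Im q - Im p\<bar>"
proof -
  have "norm (contour_integral (linepath p q) F) \<le> B * norm (q - p)"
    by (rule contour_integral_bound_linepath[OF assms(1,3)])
       (use assms(2,4) in \<open>auto simp: closed_segment_same_Re\<close>)
  also have "norm (q - p) = \<bar>Im q - Im p\<bar>"
    using assms(2) by (simp add: cmod_def)
  finally show ?thesis .
qed

lemma hseg_bound:
  fixes F :: "complex \<Rightarrow> complex"
  assumes "a < b" "continuous_on {a..b} (\<lambda>u. F (Complex u y))" "0 \<le> B"
    and "\<And>u. u \<in> {a..b} \<Longrightarrow> norm (F (Complex u y)) \<le> B"
  shows "norm (integral {a..b} (\<lambda>u. F (Complex u y))) \<le> B * (b - a)"
  using assms by (intro integral_bound) auto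

lemma strip_shift:
  fixes F :: "complex \<Rightarrow> complex" and t B :: real
  assumes holo: "F holomorphic_on {z. -2 < Im z \<and> Im z < 1}" and B0: "0 \<le> B"
    and bnd: "\<And>z::complex. -1 \<le> Im z \<Longrightarrow> Im z \<le> 0 \<Longrightarrow> 1 \<le> \<bar>Re z - t\<bar> \<Longrightarrow> norm (F z) \<le> B / (1 + (Re z - t)\<^sup>2)"
  shows "(\<lambda>u. F (Complex u 0)) absolutely_integrable_on UNIV"
        "(\<lambda>u. F (Complex u (-1))) absolutely_integrable_on UNIV"
        "integral UNIV (\<lambda>u. F (Complex u 0)) = integral UNIV (\<lambda>u. F (Complex u (-1)))"
proof -
  define S where "S = {z. -2 < Im z \<and> Im z < 1}"
  have openS: "open S" unfolding S_def
    by (intro open_Collect_conj open_Collect_less) (auto intro: continuous_intros)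
  have convS: "convex S" unfolding S_def
    using convex_Int[OF convex_halfspace_Im_gt[of "-2"] convex_halfspace_Im_lt[of 1]]
    by (simp add: Collect_conj_eq)
  have contF: "continuous_on S F" using holo holomorphic_on_imp_continuous_on S_def by blast
  have hc: "continuous_on UNIV (\<lambda>u. F (Complex u y))" if "-2 < y" "y < 1" for y
    by (rule continuous_on_compose2[OF contF]) (use that in \<open>auto simp: S_def Complex_eq intro!: continuous_intros\<close>)
  have bnd0: "norm (F (Complex u 0)) \<le> B / (1 + (u - t)\<^sup>2)" if "1 \<le> \<bar>u - t\<bar>" for u
    using bnd[of "Complex u 0"] that by simp
  have bnd1: "norm (F (Complex u (-1))) \<le> B / (1 + (u - t)\<^sup>2)" if "1 \<le> \<bar>u - t\<bar>" for u
    using bnd[of "Complex u (-1)"] that by simp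
  show ai0: "(\<lambda>u. F (Complex u 0)) absolutely_integrable_on UNIV"
    by (rule abs_int_decay[where t=t and B=B]) (auto intro: bnd0 hc)
  show ai1: "(\<lambda>u. F (Complex u (-1))) absolutely_integrable_on UNIV"
    by (rule abs_int_decay[where t=t and B=B]) (auto intro: bnd1 hc)
  define Ib where "Ib n = integral {-real n..real n} (\<lambda>u. F (Complex u (-1)))" for n
  define It where "It n = integral {-real n..real n} (\<lambda>u. F (Complex u 0))" for n
  define sr where "sr n = contour_integral (linepath (Complex (real n) (-1)) (Complex (real n) 0)) F" for n
  define sl where "sl n = contour_integral (linepath (Complex (-real n) 0) (Complex (-real n) (-1))) F" for n
  have ciS: "F contour_integrable_on linepath p q" if "p \<in> S" "q \<in> S" for p q
    by (rule contour_integrable_continuous_linepath, rule continuous_on_subset[OF contF])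
       (use that convS closed_segment_subset in blast)
  have key: "Ib n - It n + sr n + sl n = 0" if n: "real n \<ge> \<bar>t\<bar> + 1" for n
  proof -
    have sub: "cbox (Complex (-real n) (-1)) (Complex (real n) 0) \<subseteq> S"
      by (auto simp: S_def in_cbox_complex_iff)
    have "(F has_contour_integral 0) (rectpath (Complex (-real n) (-1)) (Complex (real n) 0))"
    proof (rule Cauchy_theorem_convex_simple[OF _ convS])
      show "F holomorphic_on S" using holo S_def by simp
      show "path_image (rectpath (Complex (- real n) (- 1)) (Complex (real n) 0)) \<subseteq> S"
        using path_image_rectpath_subset_cbox[of "Complex (- real n) (- 1)" "Complex (real n) 0"] sub n
        by auto
    qed auto
    then have "contour_integral (rectpath (Complex (-real n) (-1)) (Complex (real n) 0)) F = 0"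
      by (rule contour_integral_unique)
    moreover have "contour_integral (rectpath (Complex (-real n) (-1)) (Complex (real n) 0)) F
        = Ib n - It n + sr n + sl n"
      unfolding Ib_def It_def sr_def sl_def
    proof (rule rect_sum)
      have "path_image (rectpath (Complex (- real n) (- 1)) (Complex (real n) 0)) \<subseteq> S"
        using path_image_rectpath_subset_cbox[of "Complex (- real n) (- 1)" "Complex (real n) 0"] sub n by auto
      then show "continuous_on (path_image (rectpath (Complex (- real n) (- 1)) (Complex (real n) 0))) F"
        by (rule continuous_on_subset[OF contF])
    qed (use n in auto)
    ultimately show ?thesis by simp
  qed
  have srb: "norm (sr n) \<le> B / (1 + (real n - t)\<^sup>2)" if n: "real n \<ge> \<bar>t\<bar> + 1" for n
  proof -
    have bz: "norm (F z) \<le> B / (1 + (real n - t)\<^sup>2)" if "Re z = real n" "-1 \<le> Im z" "Im z \<le> 0" for z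
      using bnd[of z] that n by auto
    have "norm (sr n) \<le> B / (1 + (real n - t)\<^sup>2) * \<bar>Im (Complex (real n) 0) - Im (Complex (real n) (-1))\<bar>"
      unfolding sr_def
      by (rule vseg_bound) (use n B0 in \<open>auto simp: S_def closed_segment_eq_real_ivl intro!: ciS bz\<close>)
    then show ?thesis by simp
  qed
  have slb: "norm (sl n) \<le> B / (1 + (- real n - t)\<^sup>2)" if n: "real n \<ge> \<bar>t\<bar> + 1" for n
  proof -
    have bz: "norm (F z) \<le> B / (1 + (- real n - t)\<^sup>2)" if "Re z = - real n" "-1 \<le> Im z" "Im z \<le> 0" for z
      using bnd[of z] that n by auto
    have "norm (sl n) \<le> B / (1 + (- real n - t)\<^sup>2) * \<bar>Im (Complex (- real n) (-1)) - Im (Complex (- real n) 0)\<bar>"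
      unfolding sl_def
      by (rule vseg_bound) (use n B0 in \<open>auto simp: S_def closed_segment_eq_real_ivl intro!: ciS bz\<close>)
    then show ?thesis by simp
  qed
  have ev: "eventually (\<lambda>n. real n \<ge> \<bar>t\<bar> + 1) sequentially"
    by real_asymp
  have "(\<lambda>n. B / (1 + (real n - t)\<^sup>2)) \<longlonglongrightarrow> 0" by real_asymp
  then have srl: "sr \<longlonglongrightarrow> 0"
    by (rule Lim_null_comparison[rotated]) (use ev srb in \<open>auto elim: eventually_mono\<close>)
  have "(\<lambda>n. B / (1 + (- real n - t)\<^sup>2)) \<longlonglongrightarrow> 0" by real_asymp
  then have sll: "sl \<longlonglongrightarrow> 0"
    by (rule Lim_null_comparison[rotated]) (use ev slb in \<open>auto elim: eventually_mono\<close>)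
  have "(\<lambda>n. Ib n - It n + sr n + sl n) \<longlonglongrightarrow>
        integral UNIV (\<lambda>u. F (Complex u (-1))) - integral UNIV (\<lambda>u. F (Complex u 0)) + 0 + 0"
    unfolding Ib_def It_def
    by (intro tendsto_intros lim_int_sym ai0 ai1 srl sll)
  moreover have "(\<lambda>n. Ib n - It n + sr n + sl n) \<longlonglongrightarrow> 0"
    by (rule tendsto_eventually) (use ev key in \<open>auto elim: eventually_mono\<close>)
  ultimately have "integral UNIV (\<lambda>u. F (Complex u (-1))) - integral UNIV (\<lambda>u. F (Complex u 0)) + 0 + 0 = 0"
    using LIMSEQ_unique by blast
  then show "integral UNIV (\<lambda>u. F (Complex u 0)) = integral UNIV (\<lambda>u. F (Complex u (-1)))"
    by simp
qed


lemma pole_bound: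
  fixes H :: "complex \<Rightarrow> complex" and z :: complex and t :: real
  assumes bnd: "norm (H z) \<le> B / (1 + (cmod (z - t))\<^sup>2)" and "1 \<le> cmod (z - t)" "r \<le> cmod (z - t)" "0 \<le> r" "0 \<le> B"
  shows "norm (H z / (z - t)) \<le> B / (1 + r\<^sup>2)"
proof -
  have "norm (H z / (z - t)) \<le> norm (H z)"
  proof -
    have "norm (H z) * 1 \<le> norm (H z) * cmod (z - t)" by (rule mult_left_mono) (use assms(2) in auto)
    then show ?thesis using assms(2) by (simp add: norm_divide divide_le_eq)
  qed
  also have "\<dots> \<le> B / (1 + (cmod (z - t))\<^sup>2)" by (rule bnd)
  also have "\<dots> \<le> B / (1 + r\<^sup>2)"
    using assms(3,4,5) by (intro divide_left_mono) (auto intro!: add_pos_nonneg power_mono mult_pos_pos)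
  finally show ?thesis .
qed

lemma half_up:
  fixes H :: "complex \<Rightarrow> complex" and t B :: real
  assumes holo: "H holomorphic_on {z. -2 < Im z}" and B0: "0 \<le> B"
    and bnd: "\<And>z::complex. -1 \<le> Im z \<Longrightarrow> norm (H z) \<le> B / (1 + (cmod (z - t))\<^sup>2)"
  shows "(\<lambda>u. H (Complex u (-1)) / (Complex u (-1) - t)) absolutely_integrable_on UNIV"
        "integral UNIV (\<lambda>u. H (Complex u (-1)) / (Complex u (-1) - t)) = 2 * pi * \<i> * H t"
proof -
  define S where "S = {z. -2 < Im z}"
  define F where "F w = H w / (w - t)" for w
  have openS: "open S" unfolding S_def
    by (intro open_Collect_less) (auto intro: continuous_intros)
  have convS: "convex S" unfolding S_def by (rule convex_halfspace_Im_gt)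
  have contH: "continuous_on S H" using holo holomorphic_on_imp_continuous_on S_def by blast
  have contF: "continuous_on (S - {of_real t}) F"
    unfolding F_def by (intro continuous_intros continuous_on_subset[OF contH]) auto
  have Fb: "norm (F z) \<le> B / (1 + r\<^sup>2)" if "-1 \<le> Im z" "1 \<le> cmod (z - t)" "r \<le> cmod (z - t)" "0 \<le> r" for z :: complex and r :: real
    unfolding F_def by (rule pole_bound[OF bnd]) (use that B0 in auto)
  have hc: "continuous_on UNIV (\<lambda>u. F (Complex u (-1)))"
  proof (rule continuous_on_compose2[OF contF])
    show "continuous_on UNIV (\<lambda>u. Complex u (-1))" by (simp add: Complex_eq continuous_intros)
  qed (auto simp: S_def complex_eq_iff)
  show ai: "(\<lambda>u. H (Complex u (-1)) / (Complex u (-1) - t)) absolutely_integrable_on UNIV"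
    unfolding F_def[symmetric]
  proof (rule abs_int_decay[OF hc, where t=t and B=B])
    fix u assume u: "1 \<le> \<bar>u - t\<bar>"
    have "\<bar>u - t\<bar> \<le> cmod (Complex u (-1) - t)"
      using abs_Re_le_cmod[of "Complex u (-1) - t"] by simp
    then show "norm (F (Complex u (-1))) \<le> B / (1 + (u - t)\<^sup>2)"
      using Fb[of "Complex u (-1)" "\<bar>u - t\<bar>"] u by simp
  qed
  define Ib where "Ib n = integral {-real n..real n} (\<lambda>u. F (Complex u (-1)))" for n
  define It where "It n = integral {-real n..real n} (\<lambda>u. F (Complex u (real n)))" for n
  define sr where "sr n = contour_integral (linepath (Complex (real n) (-1)) (Complex (real n) (real n))) F" for n
  define sl where "sl n = contour_integral (linepath (Complex (-real n) (real n)) (Complex (-real n) (-1))) F" for n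
  have ciS: "F contour_integrable_on linepath p q" if "p \<in> S" "q \<in> S" "Im p \<ge> -1" "Im q \<ge> -1"
     "Re p = Re q" "\<bar>Re p\<bar> > \<bar>t\<bar>" for p q
  proof (rule contour_integrable_continuous_linepath, rule continuous_on_subset[OF contF])
    show "closed_segment p q \<subseteq> S - {complex_of_real t}"
      using that by (auto simp: closed_segment_same_Re S_def closed_segment_eq_real_ivl split: if_splits)
  qed
  have key: "Ib n - It n + sr n + sl n = 2 * pi * \<i> * H t" if n: "real n \<ge> \<bar>t\<bar> + 1" for n
  proof -
    let ?a = "Complex (-real n) (-1)" and ?b = "Complex (real n) (real n)"
    have box: "of_real t \<in> box ?a ?b" using n by (auto simp: in_box_complex_iff)
    have le: "Re ?a \<le> Re ?b" "Im ?a \<le> Im ?b" using n by auto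
    have cb: "cbox ?a ?b \<subseteq> S" by (auto simp: S_def in_cbox_complex_iff)
    have pi: "path_image (rectpath ?a ?b) \<subseteq> S - {of_real t}"
      using path_image_rectpath_cbox_minus_box[OF le] box cb by blast
    have "((\<lambda>w. H w / (w - t)) has_contour_integral (2*pi * \<i> * winding_number (rectpath ?a ?b) t * H t)) (rectpath ?a ?b)"
    proof (rule Cauchy_integral_formula_convex_simple[OF convS])
      show "H holomorphic_on S" using holo S_def by simp
      show "complex_of_real t \<in> interior S" using openS by (simp add: interior_open S_def)
    qed (use pi in auto)
    then have "contour_integral (rectpath ?a ?b) F = 2 * pi * \<i> * H t"
      using winding_number_rectpath[OF box] unfolding F_def by (simp add: contour_integral_unique)
    moreover have "contour_integral (rectpath ?a ?b) F = Ib n - It n + sr n + sl n"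
      unfolding Ib_def It_def sr_def sl_def
      by (rule rect_sum) (use n in \<open>auto intro: continuous_on_subset[OF contF pi]\<close>)
    ultimately show ?thesis by simp
  qed
  have srb: "norm (sr n) \<le> B / (1 + (real n - t)\<^sup>2) * (real n + 1)" if n: "real n \<ge> \<bar>t\<bar> + 1" for n
  proof -
    have bz: "norm (F z) \<le> B / (1 + (real n - t)\<^sup>2)" if "Re z = real n" "-1 \<le> Im z" for z
    proof (rule Fb)
      have "\<bar>real n - t\<bar> \<le> cmod (z - t)" using abs_Re_le_cmod[of "z - t"] that by simp
      then show "real n - t \<le> cmod (z - t)" "1 \<le> cmod (z - t)" using n by auto
    qed (use that n in auto)
    have "norm (sr n) \<le> B / (1 + (real n - t)\<^sup>2) * \<bar>Im (Complex (real n) (real n)) - Im (Complex (real n) (-1))\<bar>"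
      unfolding sr_def
      by (rule vseg_bound) (use n B0 in \<open>auto simp: S_def closed_segment_eq_real_ivl intro!: ciS bz\<close>)
    then show ?thesis by simp
  qed
  have slb: "norm (sl n) \<le> B / (1 + (real n + t)\<^sup>2) * (real n + 1)" if n: "real n \<ge> \<bar>t\<bar> + 1" for n
  proof -
    have bz: "norm (F z) \<le> B / (1 + (real n + t)\<^sup>2)" if "Re z = - real n" "-1 \<le> Im z" for z
    proof (rule Fb)
      have "\<bar>- real n - t\<bar> \<le> cmod (z - t)" using abs_Re_le_cmod[of "z - t"] that by simp
      then show "real n + t \<le> cmod (z - t)" "1 \<le> cmod (z - t)" using n by auto
    qed (use that n in auto)
    have "norm (sl n) \<le> B / (1 + (real n + t)\<^sup>2) * \<bar>Im (Complex (- real n) (-1)) - Im (Complex (- real n) (real n))\<bar>"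
      unfolding sl_def
      by (rule vseg_bound) (use n B0 in \<open>auto simp: S_def closed_segment_eq_real_ivl intro!: ciS bz\<close>)
    then show ?thesis by simp
  qed
  have itb: "norm (It n) \<le> B / (1 + (real n)\<^sup>2) * (real n - - real n)" if n: "real n \<ge> \<bar>t\<bar> + 1" for n
    unfolding It_def
  proof (rule hseg_bound)
    show "continuous_on {- real n..real n} (\<lambda>u. F (Complex u (real n)))"
    proof (rule continuous_on_compose2[OF contF])
      show "continuous_on {- real n..real n} (\<lambda>u. Complex u (real n))" by (simp add: Complex_eq continuous_intros)
    qed (use n in \<open>auto simp: S_def complex_eq_iff\<close>)
    fix u
    have "\<bar>real n\<bar> \<le> cmod (Complex u (real n) - t)" using abs_Im_le_cmod[of "Complex u (real n) - t"] by simp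
    then show "norm (F (Complex u (real n))) \<le> B / (1 + (real n)\<^sup>2)"
      using n by (intro Fb) auto
  qed (use n B0 in auto)
  have ev: "eventually (\<lambda>n. real n \<ge> \<bar>t\<bar> + 1) sequentially"
    by real_asymp
  have "(\<lambda>n. B / (1 + (real n - t)\<^sup>2) * (real n + 1)) \<longlonglongrightarrow> 0" by real_asymp
  then have srl: "sr \<longlonglongrightarrow> 0"
    by (rule Lim_null_comparison[rotated]) (use ev srb in \<open>auto elim: eventually_mono\<close>)
  have "(\<lambda>n. B / (1 + (real n + t)\<^sup>2) * (real n + 1)) \<longlonglongrightarrow> 0" by real_asymp
  then have sll: "sl \<longlonglongrightarrow> 0"
    by (rule Lim_null_comparison[rotated]) (use ev slb in \<open>auto elim: eventually_mono\<close>)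
  have itl0: "(\<lambda>n. B / (1 + (real n)\<^sup>2) * (real n - - real n)) \<longlonglongrightarrow> 0" by real_asymp
  have "eventually (\<lambda>n. norm (It n) \<le> B / (1 + (real n)\<^sup>2) * (real n - - real n)) sequentially"
    using ev itb by (auto elim: eventually_mono)
  then have itl: "It \<longlonglongrightarrow> 0"
    using itl0 by (rule Lim_null_comparison)
  have "(\<lambda>n. Ib n - It n + sr n + sl n) \<longlonglongrightarrow> integral UNIV (\<lambda>u. F (Complex u (-1))) - 0 + 0 + 0"
    unfolding Ib_def
    by (intro tendsto_intros lim_int_sym srl sll itl) (use ai F_def in simp)
  moreover have "(\<lambda>n. Ib n - It n + sr n + sl n) \<longlonglongrightarrow> 2 * pi * \<i> * H t"
    by (rule tendsto_eventually) (use ev key in \<open>auto elim: eventually_mono\<close>)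
  ultimately show "integral UNIV (\<lambda>u. H (Complex u (-1)) / (Complex u (-1) - t)) = 2 * pi * \<i> * H t"
    using LIMSEQ_unique unfolding F_def by fastforce
qed


lemma half_down:
  fixes H :: "complex \<Rightarrow> complex" and t B :: real
  assumes holo: "H holomorphic_on {z. Im z < -1/2}" and B0: "0 \<le> B"
    and bnd: "\<And>z::complex. Im z \<le> -1 \<Longrightarrow> norm (H z) \<le> B / (1 + (cmod (z - t))\<^sup>2)"
  shows "(\<lambda>u. H (Complex u (-1)) / (Complex u (-1) - t)) absolutely_integrable_on UNIV"
        "integral UNIV (\<lambda>u. H (Complex u (-1)) / (Complex u (-1) - t)) = 0"
proof -
  define S where "S = {z. Im z < -1/2}"
  define F where "F w = H w / (w - t)" for w
  have convS: "convex S" unfolding S_def by (rule convex_halfspace_Im_lt)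
  have tS: "of_real t \<notin> S" by (simp add: S_def)
  have holF: "F holomorphic_on S"
    unfolding F_def using holo tS by (intro holomorphic_intros) (auto simp: S_def)
  have contF: "continuous_on S F" using holF holomorphic_on_imp_continuous_on by blast
  have Fb: "norm (F z) \<le> B / (1 + r\<^sup>2)" if "Im z \<le> -1" "r \<le> cmod (z - t)" "0 \<le> r" for z :: complex and r :: real
  proof -
    have "1 \<le> cmod (z - t)" using abs_Im_le_cmod[of "z - t"] that(1) by simp
    have "norm (F z) \<le> norm (H z)"
    proof -
      have "norm (H z) * 1 \<le> norm (H z) * cmod (z - t)" by (rule mult_left_mono) (use \<open>1 \<le> cmod (z - t)\<close> in auto)
      then show ?thesis using \<open>1 \<le> cmod (z - t)\<close> unfolding F_def by (simp add: norm_divide divide_le_eq)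
    qed
    also have "\<dots> \<le> B / (1 + (cmod (z - t))\<^sup>2)" by (rule bnd[OF that(1)])
    also have "\<dots> \<le> B / (1 + r\<^sup>2)"
      using that(2,3) B0 by (intro divide_left_mono) (auto intro!: add_pos_nonneg power_mono mult_pos_pos)
    finally show ?thesis .
  qed
  have inS: "z \<in> S" if "Im z \<le> -1" for z using that by (simp add: S_def)
  have hc: "continuous_on UNIV (\<lambda>u. F (Complex u (-1)))"
    by (rule continuous_on_compose2[OF contF]) (auto simp: S_def Complex_eq intro!: continuous_intros)
  show ai: "(\<lambda>u. H (Complex u (-1)) / (Complex u (-1) - t)) absolutely_integrable_on UNIV"
    unfolding F_def[symmetric]
  proof (rule abs_int_decay[OF hc, where t=t and B=B])
    fix u assume u: "1 \<le> \<bar>u - t\<bar>"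
    have "\<bar>u - t\<bar> \<le> cmod (Complex u (-1) - t)"
      using abs_Re_le_cmod[of "Complex u (-1) - t"] by simp
    then show "norm (F (Complex u (-1))) \<le> B / (1 + (u - t)\<^sup>2)"
      using Fb[of "Complex u (-1)" "\<bar>u - t\<bar>"] u by simp
  qed
  define Ib where "Ib n = integral {-real n..real n} (\<lambda>u. F (Complex u (- real n)))" for n
  define It where "It n = integral {-real n..real n} (\<lambda>u. F (Complex u (-1)))" for n
  define sr where "sr n = contour_integral (linepath (Complex (real n) (-real n)) (Complex (real n) (-1))) F" for n
  define sl where "sl n = contour_integral (linepath (Complex (-real n) (-1)) (Complex (-real n) (-real n))) F" for n
  have ciS: "F contour_integrable_on linepath p q" if "Im p \<le> -1" "Im q \<le> -1" for p q
  proof (rule contour_integrable_continuous_linepath, rule continuous_on_subset[OF contF])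
    show "closed_segment p q \<subseteq> S"
      using that convS closed_segment_subset inS by blast
  qed
  have key: "Ib n - It n + sr n + sl n = 0" if n: "real n \<ge> \<bar>t\<bar> + 2" for n
  proof -
    let ?a = "Complex (-real n) (-real n)" and ?b = "Complex (real n) (-1)"
    have le: "Re ?a \<le> Re ?b" "Im ?a \<le> Im ?b" using n by auto
    have cb: "cbox ?a ?b \<subseteq> S" by (auto simp: S_def in_cbox_complex_iff)
    have pi: "path_image (rectpath ?a ?b) \<subseteq> S"
      using path_image_rectpath_subset_cbox[OF le] cb by blast
    have "(F has_contour_integral 0) (rectpath ?a ?b)"
      by (rule Cauchy_theorem_convex_simple[OF holF convS]) (use pi in auto)
    then have "contour_integral (rectpath ?a ?b) F = 0"
      by (rule contour_integral_unique)
    moreover have "contour_integral (rectpath ?a ?b) F = Ib n - It n + sr n + sl n"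
      unfolding Ib_def It_def sr_def sl_def
      by (rule rect_sum) (use n in \<open>auto intro: continuous_on_subset[OF contF pi]\<close>)
    ultimately show ?thesis by simp
  qed
  have srb: "norm (sr n) \<le> B / (1 + (real n - t)\<^sup>2) * (real n + 1)" if n: "real n \<ge> \<bar>t\<bar> + 2" for n
  proof -
    have bz: "norm (F z) \<le> B / (1 + (real n - t)\<^sup>2)" if "Re z = real n" "Im z \<le> -1" for z
    proof (rule Fb)
      have "\<bar>real n - t\<bar> \<le> cmod (z - t)" using abs_Re_le_cmod[of "z - t"] that by simp
      then show "real n - t \<le> cmod (z - t)" using n by auto
    qed (use that n in auto)
    have "norm (sr n) \<le> B / (1 + (real n - t)\<^sup>2) * \<bar>Im (Complex (real n) (-1)) - Im (Complex (real n) (-real n))\<bar>"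
      unfolding sr_def
      by (rule vseg_bound) (use n B0 in \<open>auto simp: closed_segment_eq_real_ivl split: if_splits intro!: ciS bz\<close>)
    also have "\<dots> \<le> B / (1 + (real n - t)\<^sup>2) * (real n + 1)"
      by (rule mult_left_mono) (use n B0 in auto)
    finally show ?thesis .
  qed
  have slb: "norm (sl n) \<le> B / (1 + (real n + t)\<^sup>2) * (real n + 1)" if n: "real n \<ge> \<bar>t\<bar> + 2" for n
  proof -
    have bz: "norm (F z) \<le> B / (1 + (real n + t)\<^sup>2)" if "Re z = - real n" "Im z \<le> -1" for z
    proof (rule Fb)
      have "\<bar>- real n - t\<bar> \<le> cmod (z - t)" using abs_Re_le_cmod[of "z - t"] that by simp
      then show "real n + t \<le> cmod (z - t)" using n by auto
    qed (use that n in auto)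
    have "norm (sl n) \<le> B / (1 + (real n + t)\<^sup>2) * \<bar>Im (Complex (- real n) (-real n)) - Im (Complex (- real n) (-1))\<bar>"
      unfolding sl_def
      by (rule vseg_bound) (use n B0 in \<open>auto simp: closed_segment_eq_real_ivl split: if_splits intro!: ciS bz\<close>)
    also have "\<dots> \<le> B / (1 + (real n + t)\<^sup>2) * (real n + 1)"
      by (rule mult_left_mono) (use n B0 in auto)
    finally show ?thesis .
  qed
  have ibb: "norm (Ib n) \<le> B / (1 + (real n)\<^sup>2) * (real n - - real n)" if n: "real n \<ge> \<bar>t\<bar> + 2" for n
    unfolding Ib_def
  proof (rule hseg_bound)
    show "continuous_on {- real n..real n} (\<lambda>u. F (Complex u (- real n)))"
      by (rule continuous_on_compose2[OF contF]) (use n in \<open>auto simp: S_def Complex_eq intro!: continuous_intros\<close>)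
    fix u
    have "\<bar>- real n\<bar> \<le> cmod (Complex u (- real n) - t)" using abs_Im_le_cmod[of "Complex u (- real n) - t"] by simp
    then show "norm (F (Complex u (- real n))) \<le> B / (1 + (real n)\<^sup>2)"
      using n by (intro Fb) auto
  qed (use n B0 in auto)
  have ev: "eventually (\<lambda>n. real n \<ge> \<bar>t\<bar> + 2) sequentially"
    by real_asymp
  have l1: "(\<lambda>n. B / (1 + (real n - t)\<^sup>2) * (real n + 1)) \<longlonglongrightarrow> 0" by real_asymp
  have "eventually (\<lambda>n. norm (sr n) \<le> B / (1 + (real n - t)\<^sup>2) * (real n + 1)) sequentially"
    using ev srb by (auto elim: eventually_mono)
  then have srl: "sr \<longlonglongrightarrow> 0" using l1 by (rule Lim_null_comparison)
  have l2: "(\<lambda>n. B / (1 + (real n + t)\<^sup>2) * (real n + 1)) \<longlonglongrightarrow> 0" by real_asymp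
  have "eventually (\<lambda>n. norm (sl n) \<le> B / (1 + (real n + t)\<^sup>2) * (real n + 1)) sequentially"
    using ev slb by (auto elim: eventually_mono)
  then have sll: "sl \<longlonglongrightarrow> 0" using l2 by (rule Lim_null_comparison)
  have l3: "(\<lambda>n. B / (1 + (real n)\<^sup>2) * (real n - - real n)) \<longlonglongrightarrow> 0" by real_asymp
  have "eventually (\<lambda>n. norm (Ib n) \<le> B / (1 + (real n)\<^sup>2) * (real n - - real n)) sequentially"
    using ev ibb by (auto elim: eventually_mono)
  then have ibl: "Ib \<longlonglongrightarrow> 0" using l3 by (rule Lim_null_comparison)
  have "(\<lambda>n. Ib n + sr n + sl n) \<longlonglongrightarrow> 0 + 0 + 0"
    by (intro tendsto_intros srl sll ibl)
  moreover have "eventually (\<lambda>n. Ib n + sr n + sl n = It n) sequentially"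
    using ev key by (auto elim!: eventually_mono simp: algebra_simps)
  ultimately have "It \<longlonglongrightarrow> 0"
    using Lim_transform_eventually by fastforce
  moreover have "It \<longlonglongrightarrow> integral UNIV (\<lambda>u. F (Complex u (-1)))"
    unfolding It_def by (rule lim_int_sym) (use ai F_def in simp)
  ultimately show "integral UNIV (\<lambda>u. H (Complex u (-1)) / (Complex u (-1) - t)) = 0"
    using LIMSEQ_unique unfolding F_def by fastforce
qed


definition qp :: "real \<Rightarrow> complex \<Rightarrow> complex" where "qp e z = 1 / (1 - \<i> * e * z)\<^sup>2"
definition qm :: "real \<Rightarrow> complex \<Rightarrow> complex" where "qm e z = 1 / (1 + \<i> * e * z)\<^sup>2"
definition NN :: "real \<Rightarrow> real \<Rightarrow> complex \<Rightarrow> complex" where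
  "NN \<tau> e z = exp (\<i> * \<tau> * z) * qp e z - exp (- (\<i> * \<tau> * z)) * qm e z"
definition kk :: "real \<Rightarrow> real \<Rightarrow> complex \<Rightarrow> complex" where
  "kk \<tau> e z = (if z = 0 then deriv (NN \<tau> e) 0 else (NN \<tau> e z - NN \<tau> e 0) / (z - 0)) / (2 * pi * \<i>)"
definition kr :: "real \<Rightarrow> real \<Rightarrow> real \<Rightarrow> real" where
  "kr \<tau> e d = (if d = 0 then (\<tau> + 2 * e) / pi else
      (sin (\<tau> * d) * (1 - e\<^sup>2 * d\<^sup>2) + 2 * e * d * cos (\<tau> * d)) / (pi * d * (1 + e\<^sup>2 * d\<^sup>2)\<^sup>2))"

lemma qp_nz: "e * Im z > -1 \<Longrightarrow> 1 - \<i> * e * z \<noteq> 0"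
proof
  assume "e * Im z > -1" "1 - \<i> * e * z = 0"
  then have "Re (1 - \<i> * e * z) = 0" by simp
  then show False using \<open>e * Im z > -1\<close> by simp
qed

lemma qm_nz: "e * Im z < 1 \<Longrightarrow> 1 + \<i> * e * z \<noteq> 0"
proof
  assume "e * Im z < 1" "1 + \<i> * e * z = 0"
  then have "Re (1 + \<i> * e * z) = 0" by simp
  then show False using \<open>e * Im z < 1\<close> by simp
qed

definition TT :: "real \<Rightarrow> complex set" where "TT e = {z. e * Im z > -1 \<and> e * Im z < 1}"

lemma open_TT: "open (TT e)"
  unfolding TT_def by (auto intro!: continuous_intros open_Collect_conj open_Collect_less)

lemma zero_TT: "0 \<in> TT e" by (simp add: TT_def)

lemma qp_holo: "qp e holomorphic_on {z. e * Im z > -1}"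
  unfolding qp_def by (intro holomorphic_intros) (use qp_nz in auto)

lemma qm_holo: "qm e holomorphic_on {z. e * Im z < 1}"
  unfolding qm_def by (intro holomorphic_intros) (use qm_nz in auto)

lemma NN_holo: "NN \<tau> e holomorphic_on TT e"
  unfolding NN_def
  by (intro holomorphic_intros holomorphic_on_subset[OF qp_holo] holomorphic_on_subset[OF qm_holo])
     (auto simp: TT_def)

lemma NN_0 [simp]: "NN \<tau> e 0 = 0" by (simp add: NN_def qp_def qm_def)

lemma kk_holo: "kk \<tau> e holomorphic_on TT e"
proof -
  have "(\<lambda>z. if z = 0 then deriv (NN \<tau> e) 0 else (NN \<tau> e z - NN \<tau> e 0) / (z - 0)) holomorphic_on TT e"
    by (rule pole_lemma_open[OF NN_holo open_TT])
  then show ?thesis unfolding kk_def by (intro holomorphic_intros) auto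
qed

lemma kk_nz: "z \<noteq> 0 \<Longrightarrow> kk \<tau> e z = NN \<tau> e z / (2 * pi * \<i> * z)"
  by (simp add: kk_def field_simps)

lemma deriv_NN0: "deriv (NN \<tau> e) 0 = 2 * \<i> * (\<tau> + 2 * e)"
proof -
  have "(NN \<tau> e has_field_derivative 2 * \<i> * (\<tau> + 2 * e)) (at 0)"
    unfolding NN_def qp_def qm_def
    by (auto intro!: derivative_eq_intros simp: power2_eq_square algebra_simps)
  then show ?thesis by (rule DERIV_imp_deriv)
qed

lemma NN_real:
  fixes d :: real assumes "d \<noteq> 0"
  shows "NN \<tau> e d = 2 * \<i> * of_real (sin (\<tau> * d) * (1 - e\<^sup>2 * d\<^sup>2) + 2 * e * d * cos (\<tau> * d)) / (of_real (1 + e\<^sup>2 * d\<^sup>2))\<^sup>2"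
proof -
  define c where "c = cos (\<tau> * d)"
  define s where "s = sin (\<tau> * d)"
  have e1: "exp (\<i> * \<tau> * d) = of_real c + \<i> * of_real s"
    using cis_conv_exp[of "\<tau> * d"] by (simp add: cis.code Complex_eq mult.commute mult.left_commute c_def s_def)
  have e2: "exp (- (\<i> * \<tau> * d)) = of_real c - \<i> * of_real s"
    using cis_conv_exp[of "- \<tau> * d"] by (simp add: cis.code Complex_eq mult.commute mult.left_commute c_def s_def)
  define P where "P = 1 - \<i> * e * d"
  define Q where "Q = 1 + \<i> * e * d"
  have P: "P \<noteq> 0" unfolding P_def by (rule qp_nz) simp
  have Q: "Q \<noteq> 0" unfolding Q_def by (rule qm_nz) simp
  have D: "(of_real (1 + e\<^sup>2 * d\<^sup>2) :: complex) = P * Q"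
    by (simp add: P_def Q_def algebra_simps power2_eq_square)
  have num: "(of_real c + \<i> * of_real s) * Q\<^sup>2 - (of_real c - \<i> * of_real s) * P\<^sup>2
       = 2 * \<i> * of_real (s * (1 - e\<^sup>2 * d\<^sup>2) + 2 * e * d * c)"
    by (simp add: P_def Q_def complex_eq_iff power2_eq_square algebra_simps)
  have "NN \<tau> e d = ((of_real c + \<i> * of_real s) * Q\<^sup>2 - (of_real c - \<i> * of_real s) * P\<^sup>2) / (P * Q)\<^sup>2"
    unfolding NN_def qp_def qm_def e1 e2 P_def[symmetric] Q_def[symmetric] using P Q
    by (simp add: field_simps)
  also have "\<dots> = 2 * \<i> * of_real (s * (1 - e\<^sup>2 * d\<^sup>2) + 2 * e * d * c) / (of_real (1 + e\<^sup>2 * d\<^sup>2))\<^sup>2"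
    by (simp only: num D)
  finally show ?thesis by (simp add: c_def s_def)
qed

lemma aux_div: fixes N D d :: real assumes "D \<noteq> 0" "d \<noteq> 0"
  shows "2 * \<i> * of_real N / (of_real D)\<^sup>2 / (2 * pi * \<i> * d) = of_real (N / (pi * d * D\<^sup>2))"
  using assms by (simp add: field_simps)

lemma kk_real: "kk \<tau> e (of_real d) = of_real (kr \<tau> e d)"
proof (cases "d = 0")
  case True
  then show ?thesis by (simp add: kk_def kr_def deriv_NN0 field_simps)
next
  case False
  have "kk \<tau> e (of_real d) = NN \<tau> e d / (2 * pi * \<i> * d)" using False by (simp add: kk_nz)
  also have "\<dots> = of_real (kr \<tau> e d)"
  proof -
    have "1 + e\<^sup>2 * d\<^sup>2 \<noteq> 0" by (metis add_pos_nonneg zero_less_one zero_le_power2 mult_nonneg_nonneg less_irrefl)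
    then show ?thesis unfolding NN_real[OF False] kr_def using False aux_div by simp
  qed
  finally show ?thesis .
qed


lemma qp_ineq:
  fixes e x y :: real assumes e: "0 < e" "e \<le> 1/4" and y: "-1 \<le> y"
  shows "e\<^sup>2 * (1 + (x\<^sup>2 + y\<^sup>2)) \<le> 3 * ((1 + e * y)\<^sup>2 + (e * x)\<^sup>2)"
proof (cases "y \<ge> 0")
  case True
  have "e\<^sup>2 \<le> 1" using e by (simp add: power_le_one)
  moreover have "(1 + e * y)\<^sup>2 \<ge> 1 + e\<^sup>2 * y\<^sup>2"
    using True e by (simp add: power2_eq_square algebra_simps)
  moreover have "0 \<le> e\<^sup>2 * x\<^sup>2" by simp
  moreover have "0 \<le> (1 + e * y)\<^sup>2" by simp
  ultimately have "e\<^sup>2 + e\<^sup>2 * y\<^sup>2 \<le> 3 * (1 + e * y)\<^sup>2 + 2 * (e\<^sup>2 * x\<^sup>2)" by linarith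
  then show ?thesis by (simp add: power_mult_distrib algebra_simps)
next
  case False
  have "e * (-1) \<le> e * y" by (rule mult_left_mono) (use y e in auto)
  then have h: "1 + e * y \<ge> 3/4" using e by linarith
  have "(3/4::real)\<^sup>2 \<le> (1 + e * y)\<^sup>2" by (rule power_mono) (use h in auto)
  then have "(1 + e * y)\<^sup>2 \<ge> 9/16" by (simp add: power2_eq_square)
  moreover have "e\<^sup>2 \<le> 1/16"
  proof -
    have "e\<^sup>2 \<le> (1/4)\<^sup>2" by (rule power_mono) (use e in auto)
    then show ?thesis by (simp add: power2_eq_square)
  qed
  moreover have "y\<^sup>2 \<le> 1" using y False by (simp add: abs_square_le_1)
  moreover have "e\<^sup>2 * y\<^sup>2 \<le> e\<^sup>2" using \<open>y\<^sup>2 \<le> 1\<close> by (simp add: mult_left_le)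
  moreover have "0 \<le> e\<^sup>2 * x\<^sup>2" by simp
  ultimately have "e\<^sup>2 + e\<^sup>2 * y\<^sup>2 \<le> 3 * (1 + e * y)\<^sup>2 + 2 * (e\<^sup>2 * x\<^sup>2)" by linarith
  then show ?thesis by (simp add: power_mult_distrib algebra_simps)
qed

lemma qp_bound:
  assumes e: "0 < e" "e \<le> 1/4" and y: "-1 \<le> Im d"
  shows "cmod (qp e d) \<le> 3 / (e\<^sup>2 * (1 + (cmod d)\<^sup>2))"
proof -
  have "e * (-1) \<le> e * Im d" by (rule mult_left_mono) (use y e in auto)
  then have nz: "1 - \<i> * e * d \<noteq> 0" using e by (intro qp_nz) linarith
  have n2: "(cmod (1 - \<i> * e * d))\<^sup>2 = (1 + e * Im d)\<^sup>2 + (e * Re d)\<^sup>2"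
    by (simp only: cmod_power2) (simp add: power2_eq_square algebra_simps)
  have "e\<^sup>2 * (1 + (cmod d)\<^sup>2) \<le> 3 * (cmod (1 - \<i> * e * d))\<^sup>2"
    unfolding n2 cmod_power2 using qp_ineq[OF e y] by simp
  moreover have "0 < e\<^sup>2 * (1 + (cmod d)\<^sup>2)" using e by (intro mult_pos_pos add_pos_nonneg) auto
  moreover have "0 < (cmod (1 - \<i> * e * d))\<^sup>2" using nz by simp
  ultimately have "1 / (cmod (1 - \<i> * e * d))\<^sup>2 \<le> 3 / (e\<^sup>2 * (1 + (cmod d)\<^sup>2))"
    by (simp add: divide_simps)
  then show ?thesis by (simp add: qp_def norm_divide norm_power)
qed

lemma qm_qp: "qm e d = qp e (-d)" by (simp add: qm_def qp_def)

lemma qm_bound: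
  assumes e: "0 < e" "e \<le> 1/4" and y: "Im d \<le> 1"
  shows "cmod (qm e d) \<le> 3 / (e\<^sup>2 * (1 + (cmod d)\<^sup>2))"
  using qp_bound[OF e, of "-d"] y by (simp add: qm_qp)

lemma kr_bounds:
  fixes \<tau> e d :: real assumes tau: "0 < \<tau>" and e: "0 \<le> e" "e \<le> 1/4" and d: "d \<noteq> 0"
  shows "\<bar>kr \<tau> e d\<bar> \<le> (\<tau> + 1/2) / pi" "\<bar>kr \<tau> e d\<bar> \<le> 2 / (pi * \<bar>d\<bar>)"
proof -
  define s c D where "s = sin (\<tau> * d)" and "c = cos (\<tau> * d)" and "D = 1 + e\<^sup>2 * d\<^sup>2"
  have D1: "1 \<le> D" unfolding D_def by simp
  have kr: "kr \<tau> e d = (s * (1 - e\<^sup>2 * d\<^sup>2) + 2 * e * d * c) / (pi * d * D\<^sup>2)"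
    using d by (simp add: kr_def s_def c_def D_def)
  have "\<bar>s * (1 - e\<^sup>2 * d\<^sup>2) + 2 * e * d * c\<bar> \<le> \<bar>s\<bar> * D + 2 * e * \<bar>d\<bar>"
  proof -
    have "0 \<le> e\<^sup>2 * d\<^sup>2" by simp
    then have "\<bar>1 - e\<^sup>2 * d\<^sup>2\<bar> \<le> D" unfolding D_def by (simp add: abs_le_iff)
    then have a: "\<bar>s * (1 - e\<^sup>2 * d\<^sup>2)\<bar> \<le> \<bar>s\<bar> * D" by (simp add: abs_mult mult_left_mono)
    have "\<bar>c\<bar> \<le> 1" unfolding c_def by simp
    then have b: "\<bar>2 * e * d * c\<bar> \<le> 2 * e * \<bar>d\<bar>" using e by (simp add: abs_mult mult_left_le)
    show ?thesis using a b abs_triangle_ineq order_trans add_mono by fastforce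
  qed
  then have "\<bar>kr \<tau> e d\<bar> \<le> (\<bar>s\<bar> * D + 2 * e * \<bar>d\<bar>) / (pi * \<bar>d\<bar> * D\<^sup>2)"
    unfolding kr using d D1 by (simp add: abs_mult abs_divide divide_right_mono)
  also have "\<dots> = \<bar>s\<bar> / (pi * \<bar>d\<bar> * D) + 2 * e / (pi * D\<^sup>2)"
    using d D1 by (simp add: field_simps power2_eq_square)
  also have "\<dots> \<le> \<bar>s\<bar> / (pi * \<bar>d\<bar>) + 2 * e / (pi * D)"
  proof (intro add_mono)
    have "pi * \<bar>d\<bar> * 1 \<le> pi * \<bar>d\<bar> * D" by (rule mult_left_mono) (use D1 in auto)
    then show "\<bar>s\<bar> / (pi * \<bar>d\<bar> * D) \<le> \<bar>s\<bar> / (pi * \<bar>d\<bar>)"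
      using d by (intro frac_le) auto
    show "2 * e / (pi * D\<^sup>2) \<le> 2 * e / (pi * D)"
      using e D1 by (intro divide_left_mono) (auto simp: power2_eq_square)
  qed
  finally have main: "\<bar>kr \<tau> e d\<bar> \<le> \<bar>s\<bar> / (pi * \<bar>d\<bar>) + 2 * e / (pi * D)" .
  have s1: "\<bar>s\<bar> \<le> \<tau> * \<bar>d\<bar>" unfolding s_def using abs_sin_x_le_abs_x[of "\<tau> * d"] tau by (simp add: abs_mult)
  have s2: "\<bar>s\<bar> \<le> 1" unfolding s_def by simp
  have eD1: "2 * e / D \<le> 1/2" using e D1 by (simp add: divide_simps)
  have eD2: "2 * e / D \<le> 1 / \<bar>d\<bar>"
  proof -
    have "0 \<le> (1 - e * \<bar>d\<bar>)\<^sup>2" by simp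
    then have "2 * e * \<bar>d\<bar> \<le> D" unfolding D_def by (simp add: power2_eq_square algebra_simps)
    then show ?thesis using d D1 by (simp add: divide_simps mult.commute)
  qed
  show "\<bar>kr \<tau> e d\<bar> \<le> (\<tau> + 1/2) / pi"
  proof -
    have "\<bar>s\<bar> / (pi * \<bar>d\<bar>) \<le> \<tau> / pi" using s1 d by (simp add: divide_simps mult.commute)
    moreover have "2 * e / (pi * D) \<le> (1/2) / pi"
    proof -
      have "2 * e / (pi * D) = (2 * e / D) / pi" by simp
      also have "\<dots> \<le> (1/2) / pi" by (rule divide_right_mono[OF eD1]) simp
      finally show ?thesis .
    qed
    moreover have "\<tau> / pi + (1/2) / pi = (\<tau> + 1/2) / pi" by (simp add: add_divide_distrib)
    ultimately show ?thesis using main by linarith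
  qed
  show "\<bar>kr \<tau> e d\<bar> \<le> 2 / (pi * \<bar>d\<bar>)"
  proof -
    have "\<bar>s\<bar> / (pi * \<bar>d\<bar>) \<le> 1 / (pi * \<bar>d\<bar>)" using s2 d by (simp add: divide_right_mono)
    moreover have "2 * e / (pi * D) \<le> 1 / (pi * \<bar>d\<bar>)"
    proof -
      have "2 * e / (pi * D) = (2 * e / D) / pi" by simp
      also have "\<dots> \<le> (1 / \<bar>d\<bar>) / pi" by (rule divide_right_mono[OF eD2]) simp
      also have "\<dots> = 1 / (pi * \<bar>d\<bar>)" by simp
      finally show ?thesis .
    qed
    moreover have "1 / (pi * \<bar>d\<bar>) + 1 / (pi * \<bar>d\<bar>) = 2 / (pi * \<bar>d\<bar>)" by simp
    ultimately show ?thesis using main by linarith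
  qed
qed

definition K0 :: "real \<Rightarrow> real" where "K0 \<tau> = 2 * (\<tau> + 2) / pi"

lemma K0_small:
  fixes \<tau> d :: real assumes tau: "0 < \<tau>" and d: "\<bar>d\<bar> \<le> 1"
  shows "(\<tau> + 1/2) / pi \<le> K0 \<tau> / (1 + \<bar>d\<bar>)"
proof -
  have "(\<tau> + 1/2) / pi \<le> (\<tau> + 2) / pi" by (rule divide_right_mono) auto
  also have "(\<tau> + 2) / pi = 2 * (\<tau> + 2) / (2 * pi)"
    by (rule mult_divide_mult_cancel_left[symmetric]) simp
  also have "\<dots> \<le> 2 * (\<tau> + 2) / (pi * (1 + \<bar>d\<bar>))"
    by (rule frac_le) (use tau d in \<open>auto intro!: add_pos_nonneg\<close>)
  also have "\<dots> = K0 \<tau> / (1 + \<bar>d\<bar>)" by (simp add: K0_def)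
  finally show ?thesis .
qed

lemma kr_bound:
  fixes \<tau> e d :: real assumes tau: "0 < \<tau>" and e: "0 \<le> e" "e \<le> 1/4"
  shows "\<bar>kr \<tau> e d\<bar> \<le> K0 \<tau> / (1 + \<bar>d\<bar>)"
proof (cases "d = 0")
  case True
  have "\<bar>kr \<tau> e d\<bar> = (\<tau> + 2 * e) / pi" using True tau e by (simp add: kr_def)
  also have "\<dots> \<le> (\<tau> + 1/2) / pi" by (rule divide_right_mono) (use e in auto)
  also have "\<dots> \<le> K0 \<tau> / (1 + \<bar>d\<bar>)" by (rule K0_small) (use tau True in auto)
  finally show ?thesis .
next
  case False
  show ?thesis
  proof (cases "\<bar>d\<bar> \<le> 1")
    case True
    have "\<bar>kr \<tau> e d\<bar> \<le> (\<tau> + 1/2) / pi" by (rule kr_bounds(1)[OF tau e False])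
    also have "\<dots> \<le> K0 \<tau> / (1 + \<bar>d\<bar>)" by (rule K0_small[OF tau True])
    finally show ?thesis .
  next
    case nt: False
    have "\<bar>kr \<tau> e d\<bar> \<le> 2 / (pi * \<bar>d\<bar>)" by (rule kr_bounds(2)[OF tau e False])
    also have "\<dots> \<le> K0 \<tau> / (1 + \<bar>d\<bar>)"
    proof -
      have "0 \<le> \<tau> * \<bar>d\<bar>" using tau by simp
      then have a: "1 + \<bar>d\<bar> \<le> (\<tau> + 2) * \<bar>d\<bar>" using nt by (simp add: distrib_right)
      have "2 / (pi * \<bar>d\<bar>) = ((\<tau> + 2) * 2) / ((\<tau> + 2) * (pi * \<bar>d\<bar>))"
        by (rule mult_divide_mult_cancel_left[symmetric]) (use tau in simp)
      also have "\<dots> = 2 * (\<tau> + 2) / (pi * ((\<tau> + 2) * \<bar>d\<bar>))"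
        by (simp add: ac_simps)
      also have "\<dots> \<le> 2 * (\<tau> + 2) / (pi * (1 + \<bar>d\<bar>))"
        by (rule frac_le) (use tau a in \<open>auto intro!: mult_left_mono add_pos_nonneg\<close>)
      also have "\<dots> = K0 \<tau> / (1 + \<bar>d\<bar>)" by (simp add: K0_def)
      finally show ?thesis .
    qed
    finally show ?thesis .
  qed
qed


lemma exp_i_bound: "cmod (exp (\<i> * complex_of_real \<tau> * d)) = exp (- \<tau> * Im d)"
  by simp

lemma exp_mi_bound: "cmod (exp (- (\<i> * complex_of_real \<tau> * d))) = exp (\<tau> * Im d)"
  by simp

lemma NN_bound_strip:
  assumes tau: "0 < \<tau>" and e: "0 < e" "e \<le> 1/4" and d: "-1 \<le> Im d" "Im d \<le> 1"
  shows "cmod (NN \<tau> e d) \<le> 6 * exp \<tau> / (e\<^sup>2 * (1 + (cmod d)\<^sup>2))"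
proof -
  have t1: "\<tau> * (-1) \<le> \<tau> * Im d" by (rule mult_left_mono) (use d tau in auto)
  have t2: "\<tau> * Im d \<le> \<tau> * 1" by (rule mult_left_mono) (use d tau in auto)
  have a: "cmod (exp (\<i> * complex_of_real \<tau> * d)) \<le> exp \<tau>"
    unfolding exp_i_bound using t1 by simp
  have b: "cmod (exp (- (\<i> * complex_of_real \<tau> * d))) \<le> exp \<tau>"
    unfolding exp_mi_bound using t2 by simp
  have p: "cmod (qp e d) \<le> 3 / (e\<^sup>2 * (1 + (cmod d)\<^sup>2))" by (rule qp_bound[OF e d(1)])
  have m: "cmod (qm e d) \<le> 3 / (e\<^sup>2 * (1 + (cmod d)\<^sup>2))" by (rule qm_bound[OF e d(2)])
  have "cmod (NN \<tau> e d) \<le> cmod (exp (\<i> * complex_of_real \<tau> * d)) * cmod (qp e d)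
       + cmod (exp (- (\<i> * complex_of_real \<tau> * d))) * cmod (qm e d)"
    unfolding NN_def by (metis norm_triangle_ineq4 norm_mult)
  also have "\<dots> \<le> exp \<tau> * (3 / (e\<^sup>2 * (1 + (cmod d)\<^sup>2))) + exp \<tau> * (3 / (e\<^sup>2 * (1 + (cmod d)\<^sup>2)))"
    by (intro add_mono mult_mono a b p m) auto
  also have "\<dots> = 6 * exp \<tau> / (e\<^sup>2 * (1 + (cmod d)\<^sup>2))" by simp
  finally show ?thesis .
qed

lemma lin_aux:
  fixes g a p b q c d :: complex
  assumes "d \<noteq> 0" "c \<noteq> 0"
  shows "g * ((a * p - b * q) / (c * d)) = (g * a * p / d - g * b * q / d) / c"
  using assms by (simp add: field_simps)

lemma repro_eps:
  fixes \<tau> C t e :: real and G :: "complex \<Rightarrow> complex"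
  assumes tau: "0 < \<tau>" and C: "0 \<le> C" and e: "0 < e" "e \<le> 1/4"
    and holo: "G holomorphic_on UNIV"
    and bnd: "\<And>z. cmod (G z) \<le> C * exp (\<tau> * \<bar>Im z\<bar>)"
  shows "(\<lambda>u. G (of_real u) * of_real (kr \<tau> e (u - t))) absolutely_integrable_on UNIV"
        "integral UNIV (\<lambda>u. G (of_real u) * of_real (kr \<tau> e (u - t))) = G t"
proof -
  define \<Phi> where "\<Phi> z = G z * kk \<tau> e (z - t)" for z
  have eq0: "\<Phi> (Complex u 0) = G (of_real u) * of_real (kr \<tau> e (u - t))" for u
    unfolding \<Phi>_def using kk_real[of \<tau> e "u - t"] by (simp add: Complex_eq)
  have holPhi: "\<Phi> holomorphic_on {z. -2 < Im z \<and> Im z < 1}"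
  proof -
    have "(kk \<tau> e \<circ> (\<lambda>z. z - of_real t)) holomorphic_on {z. -2 < Im z \<and> Im z < 1}"
    proof (rule holomorphic_on_compose_gen[OF _ kk_holo])
      show "(\<lambda>z. z - complex_of_real t) holomorphic_on {z. - 2 < Im z \<and> Im z < 1}"
        by (intro holomorphic_intros)
      show "(\<lambda>z. z - complex_of_real t) ` {z. - 2 < Im z \<and> Im z < 1} \<subseteq> TT e"
      proof
        fix w assume "w \<in> (\<lambda>z. z - complex_of_real t) ` {z. - 2 < Im z \<and> Im z < 1}"
        then obtain z where z: "-2 < Im z" "Im z < 1" and w: "w = z - t" by auto
        have i1: "e * Im z \<le> e * 1" by (rule mult_left_mono) (use z e in auto)
        have i2: "e * (-2) \<le> e * Im z" by (rule mult_left_mono) (use z e in auto)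
        have iw: "Im w = Im z" using w by simp
        show "w \<in> TT e" unfolding TT_def mem_Collect_eq iw
          using i1 i2 e by (intro conjI) linarith+
      qed
    qed
    then show ?thesis unfolding \<Phi>_def o_def
      by (intro holomorphic_intros holomorphic_on_subset[OF holo]) auto
  qed
  define B where "B = C * exp \<tau> * (6 * exp \<tau> / e\<^sup>2)"
  have B0: "0 \<le> B" unfolding B_def using C by simp
  have sb: "norm (\<Phi> z) \<le> B / (1 + (Re z - t)\<^sup>2)"
    if z: "-1 \<le> Im z" "Im z \<le> 0" "1 \<le> \<bar>Re z - t\<bar>" for z :: complex
  proof -
    define d where "d = z - t"
    have dIm: "Im d = Im z" "Re d = Re z - t" unfolding d_def by simp_all
    have d1: "1 \<le> cmod d" using abs_Re_le_cmod[of d] z dIm by simp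
    then have dnz: "d \<noteq> 0" by auto
    have Gb: "cmod (G z) \<le> C * exp \<tau>"
    proof -
      have "\<tau> * \<bar>Im z\<bar> \<le> \<tau> * 1" by (rule mult_left_mono) (use z tau in auto)
      then have "exp (\<tau> * \<bar>Im z\<bar>) \<le> exp \<tau>" by simp
      then have "C * exp (\<tau> * \<bar>Im z\<bar>) \<le> C * exp \<tau>" by (rule mult_left_mono) (use C in auto)
      then show ?thesis using bnd[of z] by linarith
    qed
    have Nb: "cmod (NN \<tau> e d) \<le> 6 * exp \<tau> / (e\<^sup>2 * (1 + (cmod d)\<^sup>2))"
      by (rule NN_bound_strip[OF tau e]) (use z dIm in auto)
    have "cmod (kk \<tau> e d) = cmod (NN \<tau> e d) / (2 * pi * cmod d)"
      using dnz by (simp add: kk_nz norm_divide norm_mult)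
    also have "\<dots> \<le> cmod (NN \<tau> e d)"
    proof -
      have "2 * pi * 1 \<le> 2 * pi * cmod d" by (rule mult_left_mono) (use d1 in auto)
      then have "1 \<le> 2 * pi * cmod d" using pi_gt3 by linarith
      then have "cmod (NN \<tau> e d) / (2 * pi * cmod d) \<le> cmod (NN \<tau> e d) / 1"
        by (intro divide_left_mono) auto
      then show ?thesis by simp
    qed
    also have "\<dots> \<le> 6 * exp \<tau> / (e\<^sup>2 * (1 + (cmod d)\<^sup>2))" by (rule Nb)
    also have "\<dots> \<le> 6 * exp \<tau> / (e\<^sup>2 * (1 + (Re z - t)\<^sup>2))"
    proof (rule divide_left_mono)
      have "(Re z - t)\<^sup>2 \<le> (cmod d)\<^sup>2" using abs_Re_le_cmod[of d] dIm
        by (metis abs_le_square_iff abs_norm_cancel power2_abs)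
      then show "e\<^sup>2 * (1 + (Re z - t)\<^sup>2) \<le> e\<^sup>2 * (1 + (cmod d)\<^sup>2)" by (intro mult_left_mono) auto
    qed (use e in \<open>auto intro!: mult_pos_pos add_pos_nonneg\<close>)
    finally have kb: "cmod (kk \<tau> e d) \<le> 6 * exp \<tau> / (e\<^sup>2 * (1 + (Re z - t)\<^sup>2))" .
    have "norm (\<Phi> z) = cmod (G z) * cmod (kk \<tau> e d)" unfolding \<Phi>_def d_def by (simp add: norm_mult)
    also have "\<dots> \<le> (C * exp \<tau>) * (6 * exp \<tau> / (e\<^sup>2 * (1 + (Re z - t)\<^sup>2)))"
      by (intro mult_mono Gb kb) (use C in auto)
    also have "\<dots> = B / (1 + (Re z - t)\<^sup>2)" unfolding B_def by (simp add: field_simps)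
    finally show ?thesis .
  qed
  note S = strip_shift[OF holPhi B0 sb]
  show "(\<lambda>u. G (of_real u) * of_real (kr \<tau> e (u - t))) absolutely_integrable_on UNIV"
    using S(1) unfolding eq0 .
  define Hp where "Hp w = G w * exp (\<i> * \<tau> * (w - t)) * qp e (w - t)" for w
  define Hm where "Hm w = G w * exp (- (\<i> * \<tau> * (w - t))) * qm e (w - t)" for w
  have hp_holo: "Hp holomorphic_on {z. -2 < Im z}"
  proof -
    have "(qp e \<circ> (\<lambda>z. z - of_real t)) holomorphic_on {z. -2 < Im z}"
    proof (rule holomorphic_on_compose_gen[OF _ qp_holo])
      show "(\<lambda>z. z - complex_of_real t) holomorphic_on {z. - 2 < Im z}" by (intro holomorphic_intros)
      show "(\<lambda>z. z - complex_of_real t) ` {z. - 2 < Im z} \<subseteq> {z. - 1 < e * Im z}"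
      proof
        fix w assume "w \<in> (\<lambda>z. z - complex_of_real t) ` {z. - 2 < Im z}"
        then obtain z where z: "-2 < Im z" and w: "w = z - t" by auto
        have i2: "e * (-2) \<le> e * Im z" by (rule mult_left_mono) (use z e in auto)
        have iw: "Im w = Im z" using w by simp
        show "w \<in> {z. - 1 < e * Im z}" unfolding mem_Collect_eq iw using i2 e by linarith
      qed
    qed
    then show ?thesis unfolding Hp_def o_def
      by (intro holomorphic_intros holomorphic_on_subset[OF holo]) auto
  qed
  have hm_holo: "Hm holomorphic_on {z. Im z < -1/2}"
  proof -
    have "(qm e \<circ> (\<lambda>z. z - of_real t)) holomorphic_on {z. Im z < -1/2}"
    proof (rule holomorphic_on_compose_gen[OF _ qm_holo])
      show "(\<lambda>z. z - complex_of_real t) holomorphic_on {z. Im z < -1/2}" by (intro holomorphic_intros)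
      show "(\<lambda>z. z - complex_of_real t) ` {z. Im z < -1/2} \<subseteq> {z. e * Im z < 1}"
      proof
        fix w assume "w \<in> (\<lambda>z. z - complex_of_real t) ` {z. Im z < -1/2}"
        then obtain z where z: "Im z < -1/2" and w: "w = z - t" by auto
        have i2: "e * Im z \<le> e * 0" by (rule mult_left_mono) (use z e in auto)
        have iw: "Im w = Im z" using w by simp
        show "w \<in> {z. e * Im z < 1}" unfolding mem_Collect_eq iw using i2 e by linarith
      qed
    qed
    then show ?thesis unfolding Hm_def o_def
      by (intro holomorphic_intros holomorphic_on_subset[OF holo]) auto
  qed
  define Bp where "Bp = C * exp (2 * \<tau>) * 3 / e\<^sup>2"
  define Bm where "Bm = C * 3 / e\<^sup>2"
  have Bp0: "0 \<le> Bp" and Bm0: "0 \<le> Bm" using C by (auto simp: Bp_def Bm_def)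
  have hp_bnd: "norm (Hp w) \<le> Bp / (1 + (cmod (w - t))\<^sup>2)" if w: "-1 \<le> Im w" for w :: complex
  proof -
    have "\<bar>Im w\<bar> - Im w \<le> 2" using w by (auto simp: abs_if)
    then have "\<tau> * (\<bar>Im w\<bar> - Im w) \<le> \<tau> * 2" by (rule mult_left_mono) (use tau in auto)
    then have ex: "exp (\<tau> * \<bar>Im w\<bar>) * exp (- \<tau> * Im w) \<le> exp (2 * \<tau>)"
      by (simp add: exp_add[symmetric] algebra_simps)
    have "cmod (G w * exp (\<i> * \<tau> * (w - t))) \<le> C * exp (\<tau> * \<bar>Im w\<bar>) * exp (- \<tau> * Im w)"
    proof -
      have eq: "cmod (exp (\<i> * \<tau> * (w - t))) = exp (- \<tau> * Im w)" by simp
      show ?thesis unfolding norm_mult eq by (rule mult_right_mono[OF bnd[of w]]) simp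
    qed
    also have "\<dots> \<le> C * exp (2 * \<tau>)" using ex C by (simp add: mult.assoc mult_left_mono)
    finally have a: "cmod (G w * exp (\<i> * \<tau> * (w - t))) \<le> C * exp (2 * \<tau>)" .
    have b: "cmod (qp e (w - t)) \<le> 3 / (e\<^sup>2 * (1 + (cmod (w - t))\<^sup>2))"
      by (rule qp_bound[OF e]) (use w in simp)
    have "norm (Hp w) \<le> (C * exp (2 * \<tau>)) * (3 / (e\<^sup>2 * (1 + (cmod (w - t))\<^sup>2)))"
      unfolding Hp_def norm_mult[of _ "qp e (w - t)"] by (intro mult_mono a b) (use C in auto)
    also have "\<dots> = Bp / (1 + (cmod (w - t))\<^sup>2)" by (simp add: Bp_def field_simps)
    finally show ?thesis .
  qed
  have hm_bnd: "norm (Hm w) \<le> Bm / (1 + (cmod (w - t))\<^sup>2)" if w: "Im w \<le> -1" for w :: complex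
  proof -
    have ex: "exp (\<tau> * \<bar>Im w\<bar>) * exp (\<tau> * Im w) \<le> 1"
      using w by (simp add: exp_add[symmetric] algebra_simps abs_if)
    have "cmod (G w * exp (- (\<i> * \<tau> * (w - t)))) \<le> C * exp (\<tau> * \<bar>Im w\<bar>) * exp (\<tau> * Im w)"
    proof -
      have eq: "cmod (exp (- (\<i> * \<tau> * (w - t)))) = exp (\<tau> * Im w)" by simp
      show ?thesis unfolding norm_mult eq by (rule mult_right_mono[OF bnd[of w]]) simp
    qed
    also have "\<dots> \<le> C" using ex C by (simp add: mult.assoc mult_left_le)
    finally have a: "cmod (G w * exp (- (\<i> * \<tau> * (w - t)))) \<le> C" .
    have b: "cmod (qm e (w - t)) \<le> 3 / (e\<^sup>2 * (1 + (cmod (w - t))\<^sup>2))"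
      by (rule qm_bound[OF e]) (use w in simp)
    have "norm (Hm w) \<le> C * (3 / (e\<^sup>2 * (1 + (cmod (w - t))\<^sup>2)))"
      unfolding Hm_def norm_mult[of _ "qm e (w - t)"] by (intro mult_mono a b) (use C in auto)
    also have "\<dots> = Bm / (1 + (cmod (w - t))\<^sup>2)" by (simp add: Bm_def field_simps)
    finally show ?thesis .
  qed
  note UP = half_up[OF hp_holo Bp0 hp_bnd]
  note DN = half_down[OF hm_holo Bm0 hm_bnd]
  have lin: "\<Phi> (Complex u (-1)) = (Hp (Complex u (-1)) / (Complex u (-1) - t) - Hm (Complex u (-1)) / (Complex u (-1) - t)) / (2 * pi * \<i>)" for u
  proof -
    have nz: "Complex u (-1) - t \<noteq> 0" by (simp add: complex_eq_iff)
    have c: "2 * pi * \<i> \<noteq> 0" by simp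
    show ?thesis unfolding \<Phi>_def Hp_def Hm_def kk_nz[OF nz] NN_def
      by (rule lin_aux[OF nz c])
  qed
  have i1: "(\<lambda>u. Hp (Complex u (-1)) / (Complex u (-1) - t)) integrable_on UNIV"
    using UP(1) set_lebesgue_integral_eq_integral(1) by blast
  have i2: "(\<lambda>u. Hm (Complex u (-1)) / (Complex u (-1) - t)) integrable_on UNIV"
    using DN(1) set_lebesgue_integral_eq_integral(1) by blast
  have "integral UNIV (\<lambda>u. \<Phi> (Complex u (-1))) =
        (integral UNIV (\<lambda>u. Hp (Complex u (-1)) / (Complex u (-1) - t)) - integral UNIV (\<lambda>u. Hm (Complex u (-1)) / (Complex u (-1) - t))) / (2 * pi * \<i>)"
    unfolding lin integral_divide integral_diff[OF i1 i2] ..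
  also have "\<dots> = Hp t" using UP(2) DN(2) by simp
  also have "Hp t = G t" by (simp add: Hp_def qp_def)
  finally have "integral UNIV (\<lambda>u. \<Phi> (Complex u (-1))) = G t" .
  then show "integral UNIV (\<lambda>u. G (of_real u) * of_real (kr \<tau> e (u - t))) = G t"
    using S(3) unfolding eq0 by simp
qed


lemma amgm: fixes a b :: real shows "a * b \<le> (a\<^sup>2 + b\<^sup>2) / 2"
proof -
  have "0 \<le> (a - b)\<^sup>2" by simp
  then show ?thesis by (simp add: power2_eq_square algebra_simps)
qed

lemma kr_tendsto: "(\<lambda>n. kr \<tau> (1 / (real n + 4)) d) \<longlonglongrightarrow> kr \<tau> 0 d"
proof -
  have e0: "(\<lambda>n. 1 / (real n + 4)) \<longlonglongrightarrow> (0::real)" by real_asymp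
  show ?thesis
  proof (cases "d = 0")
    case True
    have "(\<lambda>n. (\<tau> + 2 * (1 / (real n + 4))) / pi) \<longlonglongrightarrow> (\<tau> + 2 * 0) / pi"
      by (intro tendsto_intros e0) auto
    then show ?thesis unfolding kr_def using True by simp
  next
    case False
    have "(\<lambda>n. (sin (\<tau> * d) * (1 - (1 / (real n + 4))\<^sup>2 * d\<^sup>2) + 2 * (1 / (real n + 4)) * d * cos (\<tau> * d)) /
              (pi * d * (1 + (1 / (real n + 4))\<^sup>2 * d\<^sup>2)\<^sup>2))
          \<longlonglongrightarrow> (sin (\<tau> * d) * (1 - 0\<^sup>2 * d\<^sup>2) + 2 * 0 * d * cos (\<tau> * d)) / (pi * d * (1 + 0\<^sup>2 * d\<^sup>2)\<^sup>2)"
      using False by (intro tendsto_intros e0) auto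
    then show ?thesis unfolding kr_def using False by simp
  qed
qed

theorem bl_repro:
  fixes \<tau> C t :: real and G :: "complex \<Rightarrow> complex"
  assumes tau: "0 < \<tau>" and C: "0 \<le> C"
    and holo: "G holomorphic_on UNIV"
    and bnd: "\<And>z. cmod (G z) \<le> C * exp (\<tau> * \<bar>Im z\<bar>)"
    and L2: "(\<lambda>u::real. (cmod (G (of_real u)))\<^sup>2) integrable_on UNIV"
  shows "(\<lambda>u. G (of_real u) * of_real (kr \<tau> 0 (u - t))) absolutely_integrable_on UNIV"
        "integral UNIV (\<lambda>u. G (of_real u) * of_real (kr \<tau> 0 (u - t))) = G t"
proof -
  define e where "e n = 1 / (real n + 4)" for n :: nat
  have e: "0 < e n" "e n \<le> 1/4" for n unfolding e_def by (auto simp: divide_simps)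
  define f where "f n u = G (of_real u) * of_real (kr \<tau> (e n) (u - t))" for n u
  define g where "g u = G (of_real u) * of_real (kr \<tau> 0 (u - t))" for u
  define h where "h u = ((cmod (G (of_real u)))\<^sup>2 + (K0 \<tau>)\<^sup>2 * (1 / (1 + (u - t)\<^sup>2))) / 2" for u
  have fa: "f n absolutely_integrable_on UNIV" for n
    unfolding f_def by (rule repro_eps(1)[OF tau C e holo bnd])
  have fi: "integral UNIV (f n) = G t" for n
    unfolding f_def by (rule repro_eps(2)[OF tau C e holo bnd])
  have hi: "h integrable_on UNIV"
    unfolding h_def
    by (intro integrable_on_divide integrable_add L2 integrable_on_mult_right inv_sq_integrable)
  have gen: "norm (G (of_real u) * of_real (kr \<tau> e' (u - t))) \<le> h u" if e': "0 \<le> e'" "e' \<le> 1/4" for u e'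
  proof -
    have kb: "\<bar>kr \<tau> e' (u - t)\<bar> \<le> K0 \<tau> / (1 + \<bar>u - t\<bar>)" by (rule kr_bound[OF tau e'])
    have "norm (G (of_real u) * of_real (kr \<tau> e' (u - t))) = cmod (G u) * \<bar>kr \<tau> e' (u - t)\<bar>"
      by (simp add: norm_mult)
    also have "\<dots> \<le> cmod (G u) * (K0 \<tau> / (1 + \<bar>u - t\<bar>))" by (rule mult_left_mono[OF kb]) simp
    also have "\<dots> \<le> ((cmod (G u))\<^sup>2 + (K0 \<tau> / (1 + \<bar>u - t\<bar>))\<^sup>2) / 2" by (rule amgm)
    also have "(K0 \<tau> / (1 + \<bar>u - t\<bar>))\<^sup>2 \<le> (K0 \<tau>)\<^sup>2 * (1 / (1 + (u - t)\<^sup>2))"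
    proof -
      have "1 + (u - t)\<^sup>2 \<le> (1 + \<bar>u - t\<bar>)\<^sup>2" by (simp add: power2_eq_square algebra_simps)
      then have "1 / (1 + \<bar>u - t\<bar>)\<^sup>2 \<le> 1 / (1 + (u - t)\<^sup>2)"
        by (intro divide_left_mono) (auto intro!: add_pos_nonneg mult_pos_pos)
      then have "(K0 \<tau>)\<^sup>2 * (1 / (1 + \<bar>u - t\<bar>)\<^sup>2) \<le> (K0 \<tau>)\<^sup>2 * (1 / (1 + (u - t)\<^sup>2))"
        by (rule mult_left_mono) simp
      then show ?thesis by (simp add: power_divide)
    qed
    finally show ?thesis unfolding h_def by (simp add: divide_right_mono)
  qed
  have fb: "norm (f n u) \<le> h u" for n u unfolding f_def using gen e[of n] by (simp add: less_imp_le)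
  have gb: "norm (g u) \<le> h u" for u unfolding g_def by (rule gen) auto
  have lim: "(\<lambda>n. f n u) \<longlonglongrightarrow> g u" for u
    unfolding f_def g_def e_def by (intro tendsto_intros kr_tendsto)
  have fI: "f n integrable_on UNIV" for n using fa set_lebesgue_integral_eq_integral(1) by blast
  have "(\<lambda>n. integral UNIV (f n)) \<longlonglongrightarrow> integral UNIV g"
    by (rule dominated_convergence(2)[OF fI hi fb lim])
  then have "(\<lambda>n. G t) \<longlonglongrightarrow> integral UNIV g" unfolding fi .
  then show "integral UNIV (\<lambda>u. G (of_real u) * of_real (kr \<tau> 0 (u - t))) = G t"
    unfolding g_def[symmetric] using LIMSEQ_unique tendsto_const by metis
  show "(\<lambda>u. G (of_real u) * of_real (kr \<tau> 0 (u - t))) absolutely_integrable_on UNIV"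
    unfolding g_def[symmetric] by (rule dominated_convergence_absolutely_integrable[OF fa hi gb lim])
qed


definition GG :: "(int \<Rightarrow> complex \<Rightarrow> complex) \<Rightarrow> (int \<Rightarrow> real \<Rightarrow> complex) \<Rightarrow> (int \<Rightarrow> real \<Rightarrow> complex) \<Rightarrow> complex \<Rightarrow> complex" where
  "GG g gp gm w = branch_val g gp gm \<lfloor>Im w / (2 * pi)\<rfloor> (exp (Re w)) (Im w - 2 * pi * of_int \<lfloor>Im w / (2 * pi)\<rfloor>)"

lemma floor_eq_k:
  fixes y :: real and k :: int
  assumes "2 * pi * k \<le> y" "y < 2 * pi * (k + 1)"
  shows "\<lfloor>y / (2 * pi)\<rfloor> = k"
proof -
  have "of_int k \<le> y / (2 * pi)" using assms(1) by (simp add: pos_le_divide_eq mult.commute)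
  moreover have "y / (2 * pi) < of_int k + 1" using assms(2) by (simp add: pos_divide_less_eq mult.commute)
  ultimately show ?thesis by (simp add: floor_eq_iff)
qed

lemma sin_shift: "sin (x + 2 * pi * of_int k) = sin x"
  by (simp add: sin_add)

lemma cos_shift: "cos (x + 2 * pi * of_int k) = cos x"
  by (simp add: cos_add)

lemma cis_shift: "cis (x + 2 * pi * of_int k) = cis x"
  by (simp add: complex_eq_iff sin_shift cos_shift)

lemma GG_strip:
  fixes k :: int
  assumes "2 * pi * k < Im w" "Im w < 2 * pi * (k + 1)"
  shows "GG g gp gm w = g k (exp w)"
proof -
  have fl: "\<lfloor>Im w / (2 * pi)\<rfloor> = k" using assms by (intro floor_eq_k) auto
  have t0: "Im w - 2 * pi * k \<noteq> 0" "Im w - 2 * pi * k \<noteq> 2 * pi" using assms by (auto simp: algebra_simps)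
  have "exp w = of_real (exp (Re w)) * cis (Im w - 2 * pi * k)"
    unfolding exp_eq_polar using cis_shift[of "Im w - 2 * pi * k" k] by simp
  then show ?thesis unfolding GG_def fl branch_val_def using t0 by simp
qed

lemma GG_line:
  fixes k :: int
  assumes "Im w = 2 * pi * k"
  shows "GG g gp gm w = gp k (exp (Re w))"
proof -
  have fl: "\<lfloor>Im w / (2 * pi)\<rfloor> = k" using assms by (intro floor_eq_k) auto
  show ?thesis unfolding GG_def fl branch_val_def using assms by simp
qed

lemma exp_line:
  fixes k :: int
  assumes "Im w = 2 * pi * k"
  shows "exp w = of_real (exp (Re w))"
  unfolding exp_eq_polar assms using cis_shift[of 0 k] by simp

lemma sin_pos_strip: fixes k :: int assumes "2 * pi * k < y" "y < 2 * pi * k + pi" shows "0 < sin y"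
proof -
  have "0 < sin (y - 2 * pi * k)" using assms by (intro sin_gt_zero) auto
  then show ?thesis using sin_shift[of "y - 2 * pi * k" k] by simp
qed

lemma sin_neg_strip: fixes k :: int assumes "2 * pi * k - pi < y" "y < 2 * pi * k" shows "sin y < 0"
proof -
  have "0 < sin (2 * pi * k - y)" using assms by (intro sin_gt_zero) auto
  then show ?thesis using sin_shift[of "-y" k] by simp
qed

lemma exp_in_slit:
  fixes k :: int
  assumes "2 * pi * k < Im w" "Im w < 2 * pi * (k + 1)"
  shows "exp w \<in> slit"
proof -
  define \<theta> where "\<theta> = Im w - 2 * pi * k"
  have th: "0 < \<theta>" "\<theta> < 2 * pi" using assms by (auto simp: \<theta>_def algebra_simps)
  have ew: "exp w = of_real (exp (Re w)) * cis \<theta>"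
    unfolding exp_eq_polar \<theta>_def using cis_shift[of "Im w - 2 * pi * k" k] by simp
  show ?thesis
  proof (cases "\<theta> = pi")
    case True
    then have "exp w = - of_real (exp (Re w))" using ew by (simp add: complex_eq_iff)
    then have "Re (exp w) < 0" by simp
    then show ?thesis unfolding slit_def by auto
  next
    case False
    have "sin \<theta> \<noteq> 0"
    proof (cases "\<theta> < pi")
      case True then show ?thesis using sin_gt_zero[of \<theta>] th by auto
    next
      case nt: False
      then have "pi < \<theta>" using False by auto
      then have "0 < sin (\<theta> - pi)" using th by (intro sin_gt_zero) auto
      then show ?thesis by (simp add: sin_diff)
    qed
    then have "Im (exp w) \<noteq> 0" using ew by simp
    then show ?thesis unfolding slit_def by auto
  qed
qed


lemma GG_holo:
  fixes g :: "int \<Rightarrow> complex \<Rightarrow> complex" and gp gm :: "int \<Rightarrow> real \<Rightarrow> complex"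
  assumes holo: "\<forall>k. g k holomorphic_on slit"
    and jump: "\<forall>k. \<forall>x>0. gm k x = gp (k + 1) x"
    and psi: "\<forall>k. \<forall>x>0. \<forall>r. 0 < r \<and> r \<le> x \<longrightarrow>
          (\<lambda>z. if Im z < 0 then g k z else if Im z = 0 then gm k (Re z) else g (k + 1) z)
            analytic_on ball (of_real x) r"
  shows "GG g gp gm holomorphic_on UNIV"
proof -
  have "GG g gp gm analytic_on UNIV"
    unfolding analytic_on_def
  proof
    fix w0 :: complex
    define k where "k = \<lfloor>Im w0 / (2 * pi)\<rfloor>"
    have kb: "2 * pi * k \<le> Im w0" "Im w0 < 2 * pi * (k + 1)"
    proof -
      have "of_int k \<le> Im w0 / (2 * pi)" "Im w0 / (2 * pi) < of_int k + 1"
        unfolding k_def by linarith+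
      then show "2 * pi * k \<le> Im w0" "Im w0 < 2 * pi * (k + 1)"
        by (simp_all add: pos_le_divide_eq pos_divide_less_eq mult.commute)
    qed
    obtain UU where UU: "open UU" "w0 \<in> UU" "GG g gp gm holomorphic_on UU"
    proof (cases "2 * pi * k < Im w0")
      case True
      define UU where "UU = {w. 2 * pi * k < Im w \<and> Im w < 2 * pi * (k + 1)}"
      have oU: "open UU" unfolding UU_def
        by (auto intro!: continuous_intros open_Collect_conj open_Collect_less)
      have "(g k \<circ> exp) holomorphic_on UU"
        by (rule holomorphic_on_compose_gen[OF _ holo[rule_format]])
           (auto intro: holomorphic_intros exp_in_slit simp: UU_def)
      then have "GG g gp gm holomorphic_on UU"
        by (rule holomorphic_transform) (auto simp: UU_def GG_strip)
      then show ?thesis using that oU True kb by (auto simp: UU_def)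
    next
      case False
      then have line: "Im w0 = 2 * pi * k" using kb by auto
      define x0 where "x0 = exp (Re w0)"
      have x0: "0 < x0" unfolding x0_def by simp
      define \<Psi> where "\<Psi> = (\<lambda>z. if Im z < 0 then g (k - 1) z else if Im z = 0 then gm (k - 1) (Re z) else g (k - 1 + 1) z)"
      have \<Psi>h: "\<Psi> holomorphic_on ball (of_real x0) x0"
        using psi x0 unfolding \<Psi>_def by (intro analytic_imp_holomorphic) auto
      define UU where "UU = exp -` ball (of_real x0) x0 \<inter> {w. 2 * pi * k - pi/2 < Im w \<and> Im w < 2 * pi * k + pi/2}"
      have oU: "open UU" unfolding UU_def
        by (intro open_Int open_vimage) (auto intro!: continuous_intros open_Collect_conj open_Collect_less)
      have w0U: "w0 \<in> UU" unfolding UU_def x0_def using exp_line[OF line] line x0 by auto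
      have "(\<Psi> \<circ> exp) holomorphic_on UU"
        by (rule holomorphic_on_compose_gen[OF _ \<Psi>h]) (auto intro: holomorphic_intros simp: UU_def)
      moreover have "(\<Psi> \<circ> exp) w = GG g gp gm w" if w: "w \<in> UU" for w
      proof -
        have wi: "2 * pi * k - pi/2 < Im w" "Im w < 2 * pi * k + pi/2" using w by (auto simp: UU_def)
        consider "Im w < 2 * pi * k" | "Im w = 2 * pi * k" | "Im w > 2 * pi * k" by linarith
        then show ?thesis
        proof cases
          case 1
          have "GG g gp gm w = g (k - 1) (exp w)" by (rule GG_strip) (use 1 wi pi_gt3 in \<open>auto simp: algebra_simps\<close>)
          moreover have "sin (Im w) < 0" by (rule sin_neg_strip[of k]) (use 1 wi in auto)
          then have "Im (exp w) < 0" by (simp add: Im_exp mult_pos_neg)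
          ultimately show ?thesis by (simp add: \<Psi>_def)
        next
          case 2
          have "GG g gp gm w = gp k (exp (Re w))" by (rule GG_line[OF 2])
          moreover have ew: "exp w = of_real (exp (Re w))" by (rule exp_line[OF 2])
          moreover have "gm (k - 1) (exp (Re w)) = gp k (exp (Re w))" using jump by simp
          ultimately show ?thesis by (simp add: \<Psi>_def)
        next
          case 3
          have "GG g gp gm w = g k (exp w)" by (rule GG_strip) (use 3 wi pi_gt3 in \<open>auto simp: algebra_simps\<close>)
          moreover have "0 < sin (Im w)" by (rule sin_pos_strip[of k]) (use 3 wi in auto)
          then have "0 < Im (exp w)" by (simp add: Im_exp)
          ultimately show ?thesis by (simp add: \<Psi>_def)
        qed
      qed
      ultimately have "GG g gp gm holomorphic_on UU" by (rule holomorphic_transform)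
      then show ?thesis using that oU w0U by blast
    qed
    then obtain e where "e > 0" "ball w0 e \<subseteq> UU" using openE by blast
    then show "\<exists>e>0. GG g gp gm holomorphic_on ball w0 e"
      using UU(3) holomorphic_on_subset by blast
  qed
  then show ?thesis by (rule analytic_imp_holomorphic)
qed


lemma exp_image: "exp ` (UNIV::real set) = {0<..}"
proof
  show "exp ` (UNIV::real set) \<subseteq> {0<..}" by auto
  show "{0<..} \<subseteq> exp ` (UNIV::real set)"
  proof
    fix y :: real assume "y \<in> {0<..}"
    then have "y = exp (ln y)" by simp
    then show "y \<in> exp ` UNIV" by blast
  qed
qed

lemma exp_powr_real: "exp a powr b = exp (b * a)" for a b :: real
  by (simp add: powr_def)

lemma lin_identity:
  fixes \<sigma> x c u :: real
  assumes s: "0 < \<sigma>" and x: "0 < x"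
  shows "lin (c / \<sigma>) ((x / exp u) powr \<sigma>) = x powr (-c) / \<sigma> * exp u powr c * kr (pi * \<sigma>) 0 (u - ln x)"
proof -
  define t where "t = ln x"
  have xt: "x = exp t" using x by (simp add: t_def)
  have X: "(x / exp u) powr \<sigma> = exp (\<sigma> * (t - u))"
    unfolding xt by (simp add: exp_diff[symmetric] exp_powr_real)
  have xc: "x powr (-c) = exp (- c * t)" unfolding xt by (simp add: exp_powr_real)
  have uc: "exp u powr c = exp (c * u)" by (simp add: exp_powr_real)
  show ?thesis
  proof (cases "u = t")
    case True
    have "x powr (-c) * exp u powr c = 1" unfolding xc uc by (simp add: True exp_add[symmetric])
    moreover have "lin (c / \<sigma>) ((x / exp u) powr \<sigma>) = 1" unfolding X using True by (simp add: lin_def)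
    moreover have "kr (pi * \<sigma>) 0 (u - ln x) = \<sigma>" using True by (simp add: kr_def t_def[symmetric])
    ultimately show ?thesis using s by simp
  next
    case False
    have ne: "\<sigma> * (t - u) \<noteq> 0" using False s by simp
    have X1: "exp (\<sigma> * (t - u)) \<noteq> 1" using ne by simp
    have lhs: "lin (c / \<sigma>) ((x / exp u) powr \<sigma>) =
        exp (- c * (t - u)) * sin (pi * (\<sigma> * (t - u))) / (pi * (\<sigma> * (t - u)))"
      unfolding X lin_def using X1 s by (simp add: exp_powr_real)
    have rhs: "kr (pi * \<sigma>) 0 (u - ln x) = sin (pi * \<sigma> * (u - t)) / (pi * (u - t))"
      using False by (simp add: kr_def t_def[symmetric])
    have e: "exp (- c * (t - u)) = exp (- c * t) * exp (c * u)"
      by (simp add: exp_add[symmetric] algebra_simps)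
    have sn: "sin (pi * \<sigma> * (u - t)) = - sin (pi * (\<sigma> * (t - u)))"
      by (simp add: sin_minus[symmetric] algebra_simps)
    have tu: "t - u \<noteq> 0" using False by simp
    show ?thesis unfolding lhs rhs xc uc e sn using s tu
      by (simp add: field_simps)
  qed
qed


lemma cv_real:
  fixes F :: "real \<Rightarrow> real" and b :: real
  assumes "(\<lambda>u. \<bar>exp u\<bar> * F (exp u)) absolutely_integrable_on UNIV"
    and "integral UNIV (\<lambda>u. \<bar>exp u\<bar> * F (exp u)) = b"
  shows "F absolutely_integrable_on {0<..}" "integral {0<..} F = b"
proof -
  have "(\<lambda>u. \<bar>exp u\<bar> * F (exp u)) absolutely_integrable_on UNIV \<and> integral UNIV (\<lambda>u. \<bar>exp u\<bar> * F (exp u)) = b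
     \<longleftrightarrow> F absolutely_integrable_on (exp ` UNIV) \<and> integral (exp ` UNIV) F = b"
    by (rule has_absolute_integral_change_of_variables_1') (auto intro!: derivative_eq_intros inj_onI)
  then show "F absolutely_integrable_on {0<..}" "integral {0<..} F = b"
    using assms unfolding exp_image by auto
qed

lemma cv_real_back:
  fixes F :: "real \<Rightarrow> real"
  assumes "F absolutely_integrable_on {0<..}"
  shows "(\<lambda>u. \<bar>exp u\<bar> * F (exp u)) absolutely_integrable_on UNIV"
proof -
  have "F absolutely_integrable_on exp ` UNIV \<longleftrightarrow> (\<lambda>u. \<bar>exp u\<bar> * F (exp u)) absolutely_integrable_on UNIV"
    by (rule absolutely_integrable_change_of_variables_1') (auto intro!: derivative_eq_intros inj_onI)
  then show ?thesis using assms unfolding exp_image by auto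
qed

theorem theorem8:
  fixes c \<sigma> :: real and f :: "real \<Rightarrow> complex"
  assumes "\<sigma> > 0"
    and "mellin_bernstein c (pi * \<sigma>) f"
    and "x > 0"
  shows "set_integrable lebesgue {0<..}
           (\<lambda>y. f y * of_real (lin (c / \<sigma>) ((x / y) powr \<sigma>) / y))
       \<and> f x = of_real \<sigma> * (LINT y:{0<..}|lebesgue. f y * of_real (lin (c / \<sigma>) ((x / y) powr \<sigma>) / y))"
proof -
  have s: "0 < \<sigma>" and x: "0 < x" using assms by auto
  define \<tau> where "\<tau> = pi * \<sigma>"
  have tau: "0 < \<tau>" unfolding \<tau>_def using s by simp
  have MB: "X2 c f \<and>
    (\<exists>(g :: int \<Rightarrow> complex \<Rightarrow> complex) (gp :: int \<Rightarrow> real \<Rightarrow> complex) (gm :: int \<Rightarrow> real \<Rightarrow> complex).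
       (\<forall>k. g k holomorphic_on slit) \<and>
       (\<forall>k. \<forall>x>0. ((\<lambda>\<epsilon>. g k (of_real x + \<i> * of_real \<epsilon>)) \<longlongrightarrow> gp k x) (at_right 0)) \<and>
       (\<forall>k. \<forall>x>0. ((\<lambda>\<epsilon>. g k (of_real x - \<i> * of_real \<epsilon>)) \<longlongrightarrow> gm k x) (at_right 0)) \<and>
       (\<forall>k. \<forall>x>0. gm k x = gp (k + 1) x) \<and>
       (\<forall>x>0. gp 0 x = of_real (x powr c) * f x) \<and>
       (\<forall>k. \<forall>x>0. \<forall>r. 0 < r \<and> r \<le> x \<longrightarrow>
          (\<lambda>z. if Im z < 0 then g k z else if Im z = 0 then gm k (Re z) else g (k + 1) z)
            analytic_on ball (of_real x) r) \<and>
       (\<exists>C>0. \<forall>k. \<forall>\<theta>\<in>{0..2*pi}. \<forall>r>0.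
          cmod (branch_val g gp gm k r \<theta>) \<le> C * exp ((pi * \<sigma>) * \<bar>2 * pi * of_int k + \<theta>\<bar>)) \<and>
       (\<forall>k. \<forall>e>0. \<exists>d>0. \<forall>r. \<forall>\<theta>\<in>{0..2*pi}. 0 < r \<and> r < d \<longrightarrow>
          cmod (branch_val g gp gm k r \<theta>) < e) \<and>
       (\<forall>k. \<forall>e>0. \<exists>R. \<forall>r. \<forall>\<theta>\<in>{0..2*pi}. r > R \<longrightarrow>
          cmod (branch_val g gp gm k r \<theta>) < e))"
    using assms(2) unfolding mellin_bernstein_def .
  then have X2: "X2 c f" by (rule conjunct1)
  from MB obtain g gp gm C where
    hol: "\<forall>k. g k holomorphic_on slit" and
    l1: "\<forall>k. \<forall>x>0. ((\<lambda>\<epsilon>. g k (of_real x + \<i> * of_real \<epsilon>)) \<longlongrightarrow> gp k x) (at_right 0)" and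
    l2: "\<forall>k. \<forall>x>0. ((\<lambda>\<epsilon>. g k (of_real x - \<i> * of_real \<epsilon>)) \<longlongrightarrow> gm k x) (at_right 0)" and
    jump: "\<forall>k. \<forall>x>0. gm k x = gp (k + 1) x" and
    gp0: "\<forall>x>0. gp 0 x = of_real (x powr c) * f x" and
    psi: "\<forall>k. \<forall>x>0. \<forall>r. 0 < r \<and> r \<le> x \<longrightarrow>
          (\<lambda>z. if Im z < 0 then g k z else if Im z = 0 then gm k (Re z) else g (k + 1) z)
            analytic_on ball (of_real x) r" and
    C: "C > 0" and Cb: "\<forall>k. \<forall>\<theta>\<in>{0..2*pi}. \<forall>r>0.
          cmod (branch_val g gp gm k r \<theta>) \<le> C * exp ((pi * \<sigma>) * \<bar>2 * pi * of_int k + \<theta>\<bar>)" and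
    iv1: "\<forall>k. \<forall>e>0. \<exists>d>0. \<forall>r. \<forall>\<theta>\<in>{0..2*pi}. 0 < r \<and> r < d \<longrightarrow>
          cmod (branch_val g gp gm k r \<theta>) < e" and
    iv2: "\<forall>k. \<forall>e>0. \<exists>R. \<forall>r. \<forall>\<theta>\<in>{0..2*pi}. r > R \<longrightarrow>
          cmod (branch_val g gp gm k r \<theta>) < e"
    by (elim conjE exE) (rule that; assumption)
  define Gf where "Gf = GG g gp gm"
  have holo: "Gf holomorphic_on UNIV" unfolding Gf_def by (rule GG_holo[OF hol jump psi])
  have bnd: "cmod (Gf z) \<le> C * exp (\<tau> * \<bar>Im z\<bar>)" for z
  proof -
    define k where "k = \<lfloor>Im z / (2 * pi)\<rfloor>"
    have kb: "2 * pi * k \<le> Im z" "Im z < 2 * pi * (k + 1)"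
    proof -
      have "of_int k \<le> Im z / (2 * pi)" "Im z / (2 * pi) < of_int k + 1"
        unfolding k_def by linarith+
      then show "2 * pi * k \<le> Im z" "Im z < 2 * pi * (k + 1)"
        by (simp_all add: pos_le_divide_eq pos_divide_less_eq mult.commute)
    qed
    have th: "Im z - 2 * pi * k \<in> {0..2*pi}" using kb by (auto simp: algebra_simps)
    have "cmod (Gf z) = cmod (branch_val g gp gm k (exp (Re z)) (Im z - 2 * pi * k))"
      unfolding Gf_def GG_def k_def ..
    also have "\<dots> \<le> C * exp ((pi * \<sigma>) * \<bar>2 * pi * of_int k + (Im z - 2 * pi * k)\<bar>)"
      by (rule Cb[rule_format, OF th]) simp
    also have "\<dots> = C * exp (\<tau> * \<bar>Im z\<bar>)" by (simp add: \<tau>_def)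
    finally show ?thesis .
  qed
  have Greal: "Gf (of_real u) = of_real (exp u powr c) * f (exp u)" for u
  proof -
    have "Gf (of_real u) = gp 0 (exp u)" unfolding Gf_def using GG_line[of "of_real u" 0] by simp
    then show ?thesis using gp0 by simp
  qed
  have L2: "(\<lambda>u::real. (cmod (Gf (of_real u)))\<^sup>2) integrable_on UNIV"
  proof -
    define F where "F y = (cmod (f y * of_real (y powr (c - 1/2))))\<^sup>2" for y
    have "F absolutely_integrable_on {0<..}" using X2 unfolding X2_def F_def by blast
    then have ai: "(\<lambda>u. \<bar>exp u\<bar> * F (exp u)) absolutely_integrable_on UNIV" by (rule cv_real_back)
    have eq: "\<bar>exp u\<bar> * F (exp u) = (cmod (Gf (of_real u)))\<^sup>2" for u
    proof -
      have "exp u * (exp ((c - 1/2) * u))\<^sup>2 = (exp (c * u))\<^sup>2"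
        by (simp add: power2_eq_square exp_add[symmetric] algebra_simps)
      then show ?thesis unfolding F_def Greal
        by (simp add: norm_mult exp_powr_real power_mult_distrib algebra_simps)
    qed
    show ?thesis using ai unfolding eq using set_lebesgue_integral_eq_integral(1) by blast
  qed
  define t where "t = ln x"
  have et: "exp t = x" unfolding t_def using x by simp
  note BL = bl_repro[OF tau less_imp_le[OF C] holo bnd L2, of t]
  have Gt: "Gf (of_real t) = of_real (x powr c) * f x" using Greal[of t] et by simp
  define K where "K = (of_real (x powr (-c) / \<sigma>) :: complex)"
  define Fy where "Fy y = f y * of_real (lin (c / \<sigma>) ((x / y) powr \<sigma>) / y)" for y
  define P where "P u = K * (Gf (of_real u) * of_real (kr \<tau> 0 (u - t)))" for u
  have key: "of_real (exp u) * Fy (exp u) = P u" for u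
  proof -
    have l: "lin (c / \<sigma>) ((x / exp u) powr \<sigma>) = x powr (-c) / \<sigma> * exp u powr c * kr \<tau> 0 (u - t)"
      unfolding \<tau>_def t_def by (rule lin_identity[OF s x])
    show ?thesis unfolding Fy_def P_def K_def Greal l
      by (simp add: field_simps)
  qed
  have Pai: "P absolutely_integrable_on UNIV"
    unfolding P_def by (rule set_integrable_mult_right) (use BL(1) in auto)
  have Phi: "(P has_integral K * Gf t) UNIV"
  proof -
    have "((\<lambda>u. Gf (of_real u) * of_real (kr \<tau> 0 (u - t))) has_integral Gf t) UNIV"
      using BL set_lebesgue_integral_eq_integral(1)[OF BL(1)] by (metis has_integral_integral)
    then show ?thesis unfolding P_def by (rule has_integral_mult_right)
  qed
  have ReP: "\<bar>exp u\<bar> * Re (Fy (exp u)) = Re (P u)" for u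
    using arg_cong[OF key[of u], of Re] by simp
  have ImP: "\<bar>exp u\<bar> * Im (Fy (exp u)) = Im (P u)" for u
    using arg_cong[OF key[of u], of Im] by simp
  have Re_ai: "(\<lambda>u. Re (P u)) absolutely_integrable_on UNIV"
    using absolutely_integrable_linear[OF Pai bounded_linear_Re] by (simp add: o_def)
  have Im_ai: "(\<lambda>u. Im (P u)) absolutely_integrable_on UNIV"
    using absolutely_integrable_linear[OF Pai bounded_linear_Im] by (simp add: o_def)
  have Re_int: "integral UNIV (\<lambda>u. Re (P u)) = Re (K * Gf t)"
    using has_integral_Re[OF Phi] by (rule integral_unique)
  have Im_int: "integral UNIV (\<lambda>u. Im (P u)) = Im (K * Gf t)"
    using has_integral_Im[OF Phi] by (rule integral_unique)
  note R = cv_real[of "\<lambda>y. Re (Fy y)", unfolded ReP, OF Re_ai Re_int]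
  note I = cv_real[of "\<lambda>y. Im (Fy y)", unfolded ImP, OF Im_ai Im_int]
  have Fai: "Fy absolutely_integrable_on {0<..}"
  proof (rule absolutely_integrable_componentwise)
    fix b :: complex assume "b \<in> Basis"
    then have "b = 1 \<or> b = \<i>" by (auto simp: Basis_complex_def)
    then show "(\<lambda>y. Fy y \<bullet> b) absolutely_integrable_on {0<..}"
      using R(1) I(1) by (auto simp: inner_complex_def)
  qed
  have FI: "(Fy has_integral integral {0<..} Fy) {0<..}"
    using set_lebesgue_integral_eq_integral(1)[OF Fai] by (rule integrable_integral)
  have "Re (integral {0<..} Fy) = Re (K * Gf t)"
    using has_integral_Re[OF FI] R(2) integral_unique by metis
  moreover have "Im (integral {0<..} Fy) = Im (K * Gf t)"
    using has_integral_Im[OF FI] I(2) integral_unique by metis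
  ultimately have intF: "integral {0<..} Fy = K * Gf t" by (simp add: complex_eq_iff)
  have LI: "(LINT y:{0<..}|lebesgue. Fy y) = K * Gf t"
    using set_lebesgue_integral_eq_integral(2)[OF Fai] intF by simp
  have fin: "f x = of_real \<sigma> * (K * Gf t)"
  proof -
    have "x powr (-c) * x powr c = 1" using x by (simp add: powr_add[symmetric])
    then show ?thesis unfolding K_def Gt using s
      by (simp add: field_simps of_real_mult[symmetric] del: of_real_mult)
  qed
  show ?thesis
    using Fai LI fin unfolding Fy_def by simp
qed


end
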